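(* Let $\mathcal X,\mathcal Y$ be Polish spaces and let $c:\mathcal X\times\mathcal Y\to\mathbb R$ be measurable with $|c(x,y)|\le 1$ for all $(x,y)$. Let $\varepsilon>0$. Then for all $\mu\in\mathcal P(\mathcal X)$ and $\nu\in\mathcal P(\mathcal Y)$, \[ \mathrm{OT}_{c,\varepsilon}(\mu,\nu)=\max_{\phi\in\mathcal F_{c,\varepsilon}}\int_{\mathcal X}\phi\,d\mu+\int_{\mathcal Y}\phi^{(c,\varepsilon)}_{\mu}\,d\nu . \]
   Context: $\mathcal P(\cdot)$ denotes Borel probability measures. For $\mu\in\mathcal P(\mathcal X)$, $\nu\in\mathcal P(\mathcal Y)$, the entropic optimal transport cost is $\mathrm{OT}_{c,\varepsilon}(\mu,\nu)=\inf_{\pi\in\Pi(\mu,\nu)}\int c\,d\pi+\varepsilon\,\mathrm{KL}(\pi\mid\mu\otimes\nu)$, where $\Pi(\mu,\nu)$ is the set of probability measures on $\mathcal X\times\mathcal Y$ with marginals $\mu,\nu$, and $\mathrm{KL}(\pi\mid\rho)=\int\log(d\pi/d\rho)\,d\pi$ if $\pi\ll\rho$ and $+\infty$ otherwise. Write $\exp_\varepsilon(t)=\exp(t/\varepsilon)$. For $\xi\in\mathcal P(\mathcal Y)$ and measurable $\psi:\mathcal Y\to\mathbb R$ (with the integral below finite and positive), $\psi^{(c,\varepsilon)}_\xi(x)=-\varepsilon\log\int_{\mathcal Y}\exp_\varepsilon(\psi(y)-c(x,y))\,d\xi(y)$ for $x\in\mathcal X$; symmetrically, for $\tilde\mu\in\mathcal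 P(\mathcal X)$ and measurable $\phi$ on $\mathcal X$, $\phi^{(c,\varepsilon)}_{\tilde\mu}(y)=-\varepsilon\log\int_{\mathcal X}\exp_\varepsilon(\phi(x)-c(x,y))\,d\tilde\mu(x)$. Define $\mathcal F_{c,\varepsilon}=\bigcup_{\xi\in\mathcal P(\mathcal Y)}\{\phi:\mathcal X\to\mathbb R\mid \exists\,\psi:\mathcal Y\to\mathbb R \text{ measurable with }\phi=\psi^{(c,\varepsilon)}_\xi,\ \|\phi\|_\infty\le 3/2,\ \|\psi\|_\infty\le 3/2\}$. *)

theory Defs
  imports "HOL-Probability.Probability"
begin

definition Prob :: "'a::topological_space measure set" where
  "Prob = {M. prob_space M \<and> sets M = sets borel}"

text \<open>Couplings \<Pi>(mu,nu): probability measures on the product (product sigma-algebra,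
  which equals the Borel sigma-algebra of the product for Polish spaces) with marginals mu, nu.\<close>
definition couplings :: "'a::topological_space measure \<Rightarrow> 'b::topological_space measure \<Rightarrow> ('a \<times> 'b) measure set" where
  "couplings \<mu> \<nu> = {\<pi>. prob_space \<pi> \<and> sets \<pi> = sets (\<mu> \<Otimes>\<^sub>M \<nu>) \<and>
                        distr \<pi> \<mu> fst = \<mu> \<and> distr \<pi> \<nu> snd = \<nu>}"

text \<open>The integral is taken in the extended reals as (positive part) - (negative part);
  the negative part is always finite for probability measures.\<close>
definition KL :: "'a measure \<Rightarrow> 'a measure \<Rightarrow> ereal" where
  "KL \<pi> \<rho> = (if sets \<pi> = sets \<rho> \<and> absolutely_continuous \<rho> \<pi>
     then (let L = (\<lambda>x. ln (enn2real (RN_deriv \<rho> \<pi> x))) in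
           enn2ereal (\<integral>\<^sup>+ x. ennreal (max 0 (L x)) \<partial>\<pi>)
           - enn2ereal (\<integral>\<^sup>+ x. ennreal (max 0 (- L x)) \<partial>\<pi>))
     else \<infinity>)"

definition OT :: "('a::topological_space \<times> 'b::topological_space \<Rightarrow> real) \<Rightarrow> real \<Rightarrow>
                  'a measure \<Rightarrow> 'b measure \<Rightarrow> ereal" where
  "OT c \<epsilon> \<mu> \<nu> = (INF \<pi> \<in> couplings \<mu> \<nu>.
      ereal (\<integral> z. c z \<partial>\<pi>) + ereal \<epsilon> * KL \<pi> (\<mu> \<Otimes>\<^sub>M \<nu>))"

definition exp_eps :: "real \<Rightarrow> real \<Rightarrow> real" where
  "exp_eps \<epsilon> t = exp (t / \<epsilon>)"

definition ctrans_Y :: "('a \<times> 'b \<Rightarrow> real) \<Rightarrow> real \<Rightarrow> 'b measure \<Rightarrow> ('b \<Rightarrow> real) \<Rightarrow> 'a \<Rightarrow> real" where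
  "ctrans_Y c \<epsilon> \<xi> \<psi> x = - \<epsilon> * ln (\<integral> y. exp_eps \<epsilon> (\<psi> y - c (x, y)) \<partial>\<xi>)"

definition ctrans_X :: "('a \<times> 'b \<Rightarrow> real) \<Rightarrow> real \<Rightarrow> 'a measure \<Rightarrow> ('a \<Rightarrow> real) \<Rightarrow> 'b \<Rightarrow> real" where
  "ctrans_X c \<epsilon> \<mu> \<phi> y = - \<epsilon> * ln (\<integral> x. exp_eps \<epsilon> (\<phi> x - c (x, y)) \<partial>\<mu>)"

definition Fce :: "('a::topological_space \<times> 'b::topological_space \<Rightarrow> real) \<Rightarrow> real \<Rightarrow> ('a \<Rightarrow> real) set" where
  "Fce c \<epsilon> = (\<Union>\<xi> \<in> (Prob :: 'b measure set).
      {\<phi>. \<exists>\<psi>. \<psi> \<in> borel_measurable borel \<and> \<phi> = ctrans_Y c \<epsilon> \<xi> \<psi> \<and>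
             (\<forall>x. \<bar>\<phi> x\<bar> \<le> 3/2) \<and> (\<forall>y. \<bar>\<psi> y\<bar> \<le> 3/2)})"

end

theory Submission
  imports Defs
begin

locale ctx =
  fixes c :: "'a::topological_space \<times> 'b::topological_space \<Rightarrow> real" and e :: real and M :: "'a measure"
  assumes c_meas: "c \<in> borel_measurable (borel \<Otimes>\<^sub>M borel)"
    and c_bd: "\<And>x y. \<bar>c (x, y)\<bar> \<le> 1"
    and e_pos: "0 < e" and M_prob: "prob_space M" and M_sets: "sets M = sets borel"
begin

interpretation P: prob_space M by (rule M_prob)

lemma dm: "a \<le> b \<Longrightarrow> a / e \<le> b / e"
  using e_pos by (simp add: divide_right_mono)

lemma space_M: "space M = UNIV"
  using sets_eq_imp_space_eq[OF M_sets] by simp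

lemma meas_M: "f \<in> borel_measurable borel \<Longrightarrow> f \<in> borel_measurable M"
  using measurable_cong_sets[OF M_sets refl] by blast

lemma cy_meas: "(\<lambda>x. c (x, y)) \<in> borel_measurable M"
proof -
  have "(\<lambda>x. c (x, y)) \<in> borel_measurable borel"
    using c_meas by measurable
  then show ?thesis by (rule meas_M)
qed

lemma int_bd: "(f::'a\<Rightarrow>real) \<in> borel_measurable M \<Longrightarrow> (\<And>x. \<bar>f x\<bar> \<le> B) \<Longrightarrow> integrable M f"
  by (rule P.integrable_const_bound[where B=B]) auto

lemma int_exp: 
  assumes f: "(f::'a\<Rightarrow>real) \<in> borel_measurable M" and b: "\<And>x. \<bar>f x\<bar> \<le> B"
  shows "integrable M (\<lambda>x. exp (f x))"
proof -
  note f[measurable]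
  have m: "(\<lambda>x. exp (f x)) \<in> borel_measurable M" by measurable
  show ?thesis by (rule int_bd[OF m, of "exp B"]) (use b in \<open>simp add: abs_le_iff\<close>)
qed

definition J :: "('a \<Rightarrow> real) \<Rightarrow> 'b \<Rightarrow> real" where
  "J \<phi> y = (\<integral>x. exp ((\<phi> x - c (x, y)) / e) \<partial>M)"

definition Z :: "('a \<Rightarrow> real) \<Rightarrow> real" where
  "Z \<phi> = (\<integral>x. exp (\<phi> x / e) \<partial>M)"

lemma G_eq: "ctrans_X c e M \<phi> y = - e * ln (J \<phi> y)"
  by (simp add: ctrans_X_def J_def exp_eps_def)

lemma intJ:
  assumes f: "\<phi> \<in> borel_measurable M" and b: "\<And>x. \<bar>\<phi> x\<bar> \<le> B"
  shows "integrable M (\<lambda>x. exp ((\<phi> x - c (x, y)) / e))"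
proof (rule int_exp)
  note f[measurable] cy_meas[measurable]
  show "(\<lambda>x. (\<phi> x - c (x, y)) / e) \<in> borel_measurable M" by measurable
  fix x show "\<bar>(\<phi> x - c (x, y)) / e\<bar> \<le> (B + 1) / e"
    using b[of x] c_bd[of x y] e_pos by (simp add: divide_right_mono abs_le_iff)
qed

lemma intZ:
  assumes f: "\<phi> \<in> borel_measurable M" and b: "\<And>x. \<bar>\<phi> x\<bar> \<le> B"
  shows "integrable M (\<lambda>x. exp (\<phi> x / e))"
proof (rule int_exp)
  note f[measurable]
  show "(\<lambda>x. \<phi> x / e) \<in> borel_measurable M" by measurable
  fix x show "\<bar>\<phi> x / e\<bar> \<le> B / e"
    using b[of x] e_pos by (simp add: divide_right_mono abs_le_iff)
qed

lemma Z_pos: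
  assumes f: "\<phi> \<in> borel_measurable M" and b: "\<And>x. \<bar>\<phi> x\<bar> \<le> B"
  shows "0 < Z \<phi>"
proof -
  have "exp (-B/e) \<le> Z \<phi>"
  proof -
    have "(\<integral>x. exp (-B/e) \<partial>M) \<le> Z \<phi>" unfolding Z_def
    proof (rule integral_mono[OF _ intZ[OF f b]])
      fix x have "-B \<le> \<phi> x" using b[of x] by (simp add: abs_le_iff)
      then show "exp (-B/e) \<le> exp (\<phi> x / e)" using dm[of "-B" "\<phi> x"] by simp
    qed simp
    then show ?thesis by (simp add: P.prob_space)
  qed
  then show ?thesis by (smt (verit) exp_gt_zero)
qed

lemma J_bounds:
  assumes f: "\<phi> \<in> borel_measurable M" and b: "\<And>x. \<bar>\<phi> x\<bar> \<le> B"
  shows "exp (-1/e) * Z \<phi> \<le> J \<phi> y" "J \<phi> y \<le> exp (1/e) * Z \<phi>"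
proof -
  have "(\<integral>x. exp (-1/e) * exp (\<phi> x / e) \<partial>M) \<le> J \<phi> y" unfolding J_def
  proof (rule integral_mono[OF _ intJ[OF f b]])
    show "integrable M (\<lambda>x. exp (- 1 / e) * exp (\<phi> x / e))" using intZ[OF f b] by simp
    fix x have "(\<phi> x - 1)/e \<le> (\<phi> x - c (x, y)) / e"
      using c_bd[of x y] e_pos by (simp add: divide_right_mono abs_le_iff)
    moreover have "exp (- 1 / e) * exp (\<phi> x / e) = exp ((\<phi> x - 1)/e)"
      by (simp add: mult_exp_exp diff_divide_distrib)
    ultimately show "exp (- 1 / e) * exp (\<phi> x / e) \<le> exp ((\<phi> x - c (x, y)) / e)"
      by simp
  qed
  then show "exp (-1/e) * Z \<phi> \<le> J \<phi> y" by (simp add: Z_def)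
  have "J \<phi> y \<le> (\<integral>x. exp (1/e) * exp (\<phi> x / e) \<partial>M)" unfolding J_def
  proof (rule integral_mono[OF intJ[OF f b]])
    show "integrable M (\<lambda>x. exp (1 / e) * exp (\<phi> x / e))" using intZ[OF f b] by simp
    fix x have "(\<phi> x - c (x, y)) / e \<le> (\<phi> x + 1)/e"
      using c_bd[of x y] e_pos by (simp add: divide_right_mono abs_le_iff)
    moreover have "exp (1 / e) * exp (\<phi> x / e) = exp ((\<phi> x + 1)/e)"
      by (simp add: mult_exp_exp add_divide_distrib)
    ultimately show "exp ((\<phi> x - c (x, y)) / e) \<le> exp (1 / e) * exp (\<phi> x / e)"
      by simp
  qed
  then show "J \<phi> y \<le> exp (1/e) * Z \<phi>" by (simp add: Z_def)
qed

lemma J_pos: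
  assumes f: "\<phi> \<in> borel_measurable M" and b: "\<And>x. \<bar>\<phi> x\<bar> \<le> B"
  shows "0 < J \<phi> y"
  using J_bounds(1)[OF f b, of y] Z_pos[OF f b] by (smt (verit) exp_gt_zero mult_pos_pos)

lemma G_bounds:
  assumes f: "\<phi> \<in> borel_measurable M" and b: "\<And>x. \<bar>\<phi> x\<bar> \<le> B"
  shows "- e * ln (Z \<phi>) - 1 \<le> ctrans_X c e M \<phi> y \<and> ctrans_X c e M \<phi> y \<le> - e * ln (Z \<phi>) + 1"
proof -
  have Z: "0 < Z \<phi>" by (rule Z_pos[OF f b])
  have J: "0 < J \<phi> y" by (rule J_pos[OF f b])
  have "ln (exp (-1/e) * Z \<phi>) \<le> ln (J \<phi> y)" using J_bounds(1)[OF f b, of y] Z J by simp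
  then have 1: "-1/e + ln (Z \<phi>) \<le> ln (J \<phi> y)" using Z by (simp add: ln_mult)
  have "ln (J \<phi> y) \<le> ln (exp (1/e) * Z \<phi>)" using J_bounds(2)[OF f b, of y] Z J by simp
  then have 2: "ln (J \<phi> y) \<le> 1/e + ln (Z \<phi>)" using Z by (simp add: ln_mult)
  have "e * (-1/e + ln (Z \<phi>)) \<le> e * ln (J \<phi> y)" using 1 e_pos by (simp add: mult_left_mono)
  moreover have "e * ln (J \<phi> y) \<le> e * (1/e + ln (Z \<phi>))" using 2 e_pos by (simp add: mult_left_mono)
  ultimately show ?thesis using e_pos by (simp add: G_eq algebra_simps)
qed

lemma Z_bounds:
  assumes f: "\<phi> \<in> borel_measurable M" and b: "\<And>x. a \<le> \<phi> x \<and> \<phi> x \<le> a + L"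
  shows "- a - L \<le> - e * ln (Z \<phi>) \<and> - e * ln (Z \<phi>) \<le> - a"
proof -
  have bb: "\<And>x. \<bar>\<phi> x\<bar> \<le> \<bar>a\<bar> + \<bar>L\<bar>" using b by (smt (verit))
  have "(\<integral>x. exp (a/e) \<partial>M) \<le> Z \<phi>" unfolding Z_def
    by (rule integral_mono[OF _ intZ[OF f bb]]) (use b e_pos in \<open>auto simp: divide_right_mono\<close>)
  then have 1: "exp (a/e) \<le> Z \<phi>" by (simp add: P.prob_space)
  have "Z \<phi> \<le> (\<integral>x. exp ((a+L)/e) \<partial>M)" unfolding Z_def
    by (rule integral_mono[OF intZ[OF f bb]]) (use b e_pos in \<open>auto simp: divide_right_mono\<close>)
  then have 2: "Z \<phi> \<le> exp ((a+L)/e)" by (simp add: P.prob_space)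
  have "a/e \<le> ln (Z \<phi>)" using 1 by (simp add: ln_ge_iff Z_pos[OF f bb])
  then have "a \<le> e * ln (Z \<phi>)" using e_pos by (simp add: field_simps)
  moreover have "ln (Z \<phi>) \<le> ln (exp ((a+L)/e))" using 2 Z_pos[OF f bb] by (subst ln_le_cancel_iff) auto
  then have "ln (Z \<phi>) \<le> (a+L)/e" by simp
  then have "e * ln (Z \<phi>) \<le> a + L" using e_pos by (simp add: field_simps)
  ultimately show ?thesis by simp
qed

end

context ctx begin
interpretation P: prob_space M by (rule M_prob)

lemma J_shift: "J (\<lambda>x. \<phi> x + t) y = exp (t/e) * J \<phi> y"
proof -
  have "J (\<lambda>x. \<phi> x + t) y = (\<integral>x. exp (t/e) * exp ((\<phi> x - c (x, y)) / e) \<partial>M)"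
    unfolding J_def by (intro Bochner_Integration.integral_cong refl) (simp add: mult_exp_exp add_divide_distrib diff_divide_distrib)
  also have "\<dots> = exp (t/e) * J \<phi> y" unfolding J_def by simp
  finally show ?thesis .
qed

lemma G_shift:
  assumes f: "\<phi> \<in> borel_measurable M" and b: "\<And>x. \<bar>\<phi> x\<bar> \<le> B"
  shows "ctrans_X c e M (\<lambda>x. \<phi> x + t) y = ctrans_X c e M \<phi> y - t"
proof -
  have J: "0 < J \<phi> y" by (rule J_pos[OF f b])
  have "ctrans_X c e M (\<lambda>x. \<phi> x + t) y = - e * (t / e + ln (J \<phi> y))"
    unfolding G_eq J_shift using J by (simp add: ln_mult)
  also have "\<dots> = ctrans_X c e M \<phi> y - t" unfolding G_eq using e_pos by (simp add: algebra_simps)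
  finally show ?thesis .
qed

lemma G_antimono:
  assumes f1: "\<phi>1 \<in> borel_measurable M" and b1: "\<And>x. \<bar>\<phi>1 x\<bar> \<le> B1"
    and f2: "\<phi>2 \<in> borel_measurable M" and b2: "\<And>x. \<bar>\<phi>2 x\<bar> \<le> B2"
    and le: "\<And>x. \<phi>1 x \<le> \<phi>2 x"
  shows "ctrans_X c e M \<phi>2 y \<le> ctrans_X c e M \<phi>1 y"
proof -
  have "J \<phi>1 y \<le> J \<phi>2 y" unfolding J_def
    by (rule integral_mono[OF intJ[OF f1 b1] intJ[OF f2 b2]]) (use le dm in simp)
  then have "ln (J \<phi>1 y) \<le> ln (J \<phi>2 y)" using J_pos[OF f1 b1] J_pos[OF f2 b2] by simp
  then show ?thesis unfolding G_eq using e_pos by (simp add: mult_left_mono)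
qed

lemma G_mono2:
  assumes f1: "\<phi>1 \<in> borel_measurable M" and b1: "\<And>x. \<bar>\<phi>1 x\<bar> \<le> B1"
    and f2: "\<phi>2 \<in> borel_measurable M" and b2: "\<And>x. \<bar>\<phi>2 x\<bar> \<le> B2"
    and d: "\<And>x. a \<le> \<phi>1 x - \<phi>2 x \<and> \<phi>1 x - \<phi>2 x \<le> a + L"
  shows "- a - L \<le> ctrans_X c e M \<phi>1 y - ctrans_X c e M \<phi>2 y \<and>
         ctrans_X c e M \<phi>1 y - ctrans_X c e M \<phi>2 y \<le> - a"
proof -
  have f3: "(\<lambda>x. \<phi>2 x + t) \<in> borel_measurable M" for t using f2 by measurable
  have b3: "\<bar>\<phi>2 x + t\<bar> \<le> B2 + \<bar>t\<bar>" for x t using b2[of x] by linarith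
  have "ctrans_X c e M (\<lambda>x. \<phi>2 x + (a + L)) y \<le> ctrans_X c e M \<phi>1 y"
    by (rule G_antimono[OF f1 b1 f3 b3]) (use d in smt)
  moreover have "ctrans_X c e M \<phi>1 y \<le> ctrans_X c e M (\<lambda>x. \<phi>2 x + a) y"
    by (rule G_antimono[OF f3 b3 f1 b1]) (use d in smt)
  ultimately show ?thesis unfolding G_shift[OF f2 b2] by simp
qed

lemma G_meas:
  assumes f: "\<phi> \<in> borel_measurable M"
  shows "ctrans_X c e M \<phi> \<in> borel_measurable borel"
proof -
  have c1: "(\<lambda>(x,y). c (y, x)) \<in> borel_measurable (borel \<Otimes>\<^sub>M borel)"
    using measurable_pair_swap[OF c_meas] by simp
  have c2: "(\<lambda>z. c (snd z, fst z)) \<in> borel_measurable ((borel::'b measure) \<Otimes>\<^sub>M M)"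
  proof -
    have "sets ((borel::'b measure) \<Otimes>\<^sub>M M) = sets (borel \<Otimes>\<^sub>M borel)"
      by (rule sets_pair_measure_cong[OF refl M_sets])
    then have eqm: "borel_measurable ((borel::'b measure) \<Otimes>\<^sub>M M) = borel_measurable (borel \<Otimes>\<^sub>M borel)"
      by (rule measurable_cong_sets[OF _ refl])
    have c1': "(\<lambda>z. c (snd z, fst z)) \<in> borel_measurable ((borel::'b measure) \<Otimes>\<^sub>M borel)"
      using c1 by (simp add: split_beta')
    show ?thesis unfolding eqm by (rule c1')
  qed
  note f[measurable] c2[measurable]
  have "(\<lambda>z. exp ((\<phi> (snd z) - c (snd z, fst z)) / e)) \<in> borel_measurable ((borel::'b measure) \<Otimes>\<^sub>M M)"
    by measurable
  then have "case_prod (\<lambda>y x. exp ((\<phi> x - c (x, y)) / e)) \<in> borel_measurable ((borel::'b measure) \<Otimes>\<^sub>M M)"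
    by (simp add: split_beta')
  then have "(\<lambda>y. \<integral>x. exp ((\<phi> x - c (x, y)) / e) \<partial>M) \<in> borel_measurable borel"
    by (rule P.borel_measurable_lebesgue_integral)
  then show ?thesis unfolding ctrans_X_def exp_eps_def by measurable
qed

lemma G_one:
  assumes f: "\<phi> \<in> borel_measurable M" and b: "\<And>x. \<bar>\<phi> x\<bar> \<le> B"
  shows "(\<integral>\<^sup>+x. ennreal (exp ((\<phi> x + ctrans_X c e M \<phi> y - c (x, y)) / e)) \<partial>M) = 1"
proof -
  have J: "0 < J \<phi> y" by (rule J_pos[OF f b])
  have ex: "exp (ctrans_X c e M \<phi> y / e) = 1 / J \<phi> y"
  proof -
    have "ctrans_X c e M \<phi> y / e = - ln (J \<phi> y)" unfolding G_eq using e_pos by simp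
    then show ?thesis using J by (simp add: exp_minus exp_ln divide_inverse)
  qed
  have eq: "\<And>x. exp ((\<phi> x + ctrans_X c e M \<phi> y - c (x, y)) / e) = exp (ctrans_X c e M \<phi> y / e) * exp ((\<phi> x - c (x, y)) / e)"
    by (simp add: mult_exp_exp add_divide_distrib diff_divide_distrib)
  have int: "integrable M (\<lambda>x. exp (ctrans_X c e M \<phi> y / e) * exp ((\<phi> x - c (x, y)) / e))"
    using intJ[OF f b] by simp
  have "(\<integral>\<^sup>+x. ennreal (exp ((\<phi> x + ctrans_X c e M \<phi> y - c (x, y)) / e)) \<partial>M)
      = ennreal (\<integral>x. exp (ctrans_X c e M \<phi> y / e) * exp ((\<phi> x - c (x, y)) / e) \<partial>M)"
    unfolding eq by (rule nn_integral_eq_integral[OF int]) simp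
  also have "\<dots> = 1" using J by (simp add: ex J_def[symmetric])
  finally show ?thesis .
qed

end

lemma realA:
  fixes th p Mx :: real
  assumes th: "0 < th" "th < 1" and p: "1 \<le> p" "p \<le> Mx"
  shows "(Mx - th * (Mx - p)) \<le> (th + (1 - th) * Mx) * (1 + th * (p - 1))"
proof -
  have "(th + (1 - th) * Mx) * (1 + th * (p - 1)) - (Mx - th * (Mx - p)) = th * (1 - th) * ((p - 1) * (Mx - 1))"
    by (simp add: algebra_simps)
  moreover have "(p - 1) * (Mx - 1) \<ge> 0" using p by simp
  moreover have "th * (1 - th) \<ge> 0" using th by simp
  ultimately show ?thesis by (metis diff_ge_0_iff_ge mult_nonneg_nonneg)
qed

lemma realB:
  fixes th s s0 :: real
  assumes th: "0 < th" "th < 1" and s: "0 \<le> s" "s \<le> s0"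
  shows "ln (th + (1 - th) * exp s) \<le> (1 - th * exp (- s0)) * s"
proof -
  define h where "h t = (1 - th * exp (- s0)) * t - ln (th + (1 - th) * exp t)" for t
  have D: "th + (1 - th) * exp t > 0" for t
  proof -
    have "0 < (1 - th) * exp t" using th by simp
    then show ?thesis using th by linarith
  qed
  have "h 0 \<le> h s"
  proof (rule DERIV_nonneg_imp_nondecreasing[OF s(1)])
    fix t assume t: "0 \<le> t" "t \<le> s"
    let ?D = "th + (1 - th) * exp t"
    let ?d = "(1 - th * exp (- s0)) - (1 - th) * exp t / ?D"
    have "DERIV h t :> ?d"
      unfolding h_def[abs_def] using D[of t]
      by (auto intro!: derivative_eq_intros)
    moreover have "?d \<ge> 0"
    proof -
      have e1: "1 \<le> exp t" using t by simp
      have "th * 1 \<le> th * exp t" using e1 th by (intro mult_left_mono) auto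
      then have "?D \<le> exp t" by (simp add: algebra_simps)
      also have "\<dots> \<le> exp s0" using t s by simp
      finally have le: "?D \<le> exp s0" .
      have eq: "(1 - th) * exp t / ?D = 1 - th / ?D"
        using D[of t] by (simp add: divide_simps)
      have "1 / exp s0 \<le> 1 / ?D" using le D[of t] by (intro divide_left_mono) auto
      then have "th * (1 / exp s0) \<le> th * (1 / ?D)" using th by (intro mult_left_mono) auto
      then have "th * exp (- s0) \<le> th / ?D" by (simp add: exp_minus divide_inverse)
      then show ?thesis using eq by simp
    qed
    ultimately show "\<exists>y. DERIV h t :> y \<and> 0 \<le> y" by blast
  qed
  then show ?thesis by (simp add: h_def)
qed

lemma realC:
  fixes U W V P Mx e1 E :: real
  assumes pos: "0 < V" "0 < W" "0 < e1" and eE: "e1 * E = 1" and WV: "W \<le> E * V"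
    and h1: "e1 * (P - V) \<le> U - W" and h2: "e1 * (Mx * V - P) \<le> Mx * W - U"
    and P: "V \<le> P" "P \<le> Mx * V"
  shows "1 + e1 * e1 * (P / V - 1) \<le> U / W" "U / W \<le> Mx - e1 * e1 * (Mx - P / V)"
proof -
  have E: "0 < E" using eE pos by (metis zero_less_mult_pos zero_less_one)
  have Ei: "1 / E = e1" using eE E by (simp add: field_simps)
  have a1: "(P - V) / (E * V) \<le> (P - V) / W"
    using P WV pos by (intro divide_left_mono) auto
  have "(P - V) / (E * V) = (1/E) * ((P - V) / V)" by simp
  also have "\<dots> = e1 * (P / V - 1)" using pos by (simp add: Ei diff_divide_distrib)
  finally have "e1 * e1 * (P / V - 1) = e1 * ((P - V) / (E * V))" by simp
  also have "\<dots> \<le> e1 * ((P - V) / W)" using a1 pos by (intro mult_left_mono) auto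
  also have "\<dots> = (e1 * (P - V)) / W" by simp
  also have "\<dots> \<le> (U - W) / W" using h1 pos by (intro divide_right_mono) auto
  also have "\<dots> = U / W - 1" using pos by (simp add: field_simps)
  finally show "1 + e1 * e1 * (P / V - 1) \<le> U / W" by simp
  have a2: "(Mx * V - P) / (E * V) \<le> (Mx * V - P) / W"
    using P WV pos by (intro divide_left_mono) auto
  have "(Mx * V - P) / (E * V) = (1/E) * ((Mx * V - P) / V)" by simp
  also have "\<dots> = e1 * (Mx - P / V)" using pos by (simp add: Ei diff_divide_distrib)
  finally have "e1 * e1 * (Mx - P / V) = e1 * ((Mx * V - P) / (E * V))" by simp
  also have "\<dots> \<le> e1 * ((Mx * V - P) / W)" using a2 pos by (intro mult_left_mono) auto
  also have "\<dots> = (e1 * (Mx * V - P)) / W" by simp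
  also have "\<dots> \<le> (Mx * W - U) / W" using h2 pos by (intro divide_right_mono) auto
  also have "\<dots> = Mx - U / W" using pos by (simp add: field_simps)
  finally show "U / W \<le> Mx - e1 * e1 * (Mx - P / V)" by simp
qed

definition lamb :: "real \<Rightarrow> real" where
  "lamb e = 1 - exp (-2/e) * exp (-4/e)"

lemma lamb_bounds: "0 < e \<Longrightarrow> 0 \<le> lamb e \<and> lamb e < 1"
proof -
  assume e: "0 < e"
  have "exp (-2/e) * exp (-4/e) \<le> 1 * 1" using e
    by (intro mult_mono) (auto simp: divide_simps)
  moreover have "0 < exp (-2/e) * exp (-4/e)" by simp
  ultimately show ?thesis unfolding lamb_def by simp
qed

lemma realD:
  fixes th p Mx r L e a :: real
  assumes e: "0 < e" and th: "th = exp (-2/e)" and Mx: "Mx = exp (L/e)" and L: "0 \<le> L" "L \<le> 4"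
    and p: "1 \<le> p" "p \<le> Mx"
    and r: "1 + th * (p - 1) \<le> r" "r \<le> Mx - th * (Mx - p)"
  shows "- a - e * ln (Mx - th * (Mx - p)) \<le> - a - e * ln r \<and>
         - a - e * ln r \<le> (- a - e * ln (Mx - th * (Mx - p))) + lamb e * L"
proof -
  have th0: "0 < th" "th < 1" using th e by (auto simp: divide_simps)
  have q0: "0 < 1 + th * (p - 1)" using th0 p by (smt (verit) mult_nonneg_nonneg)
  have r0: "0 < r" using q0 r by linarith
  define X where "X = Mx - th * (Mx - p)"
  have X0: "0 < X" using r0 r X_def by linarith
  have "ln r \<le> ln X" using r r0 X0 X_def by simp
  then have lo: "- a - e * ln X \<le> - a - e * ln r" using e by (simp add: mult_left_mono)
  have "X \<le> (th + (1 - th) * Mx) * (1 + th * (p - 1))" unfolding X_def by (rule realA[OF th0 p])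
  then have "X / (1 + th * (p - 1)) \<le> th + (1 - th) * Mx" using q0 by (simp add: divide_simps)
  then have "ln (X / (1 + th * (p - 1))) \<le> ln (th + (1 - th) * Mx)"
  proof -
    have "0 < X / (1 + th * (p - 1))" using X0 q0 by simp
    then show ?thesis using \<open>X / (1 + th * (p - 1)) \<le> th + (1 - th) * Mx\<close>
      by (subst ln_le_cancel_iff) auto
  qed
  also have "\<dots> \<le> (1 - th * exp (- (4/e))) * (L / e)" unfolding Mx
    by (rule realB[OF th0]) (use L e in \<open>auto simp: divide_simps\<close>)
  finally have i1: "ln X - ln (1 + th * (p - 1)) \<le> (1 - th * exp (- (4/e))) * (L / e)"
    using X0 q0 by (simp add: ln_div)
  have "ln (1 + th * (p - 1)) \<le> ln r" using q0 r0 r by simp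
  then have "ln X - ln r \<le> (1 - th * exp (- (4/e))) * (L / e)" using i1 by linarith
  then have "e * (ln X - ln r) \<le> e * ((1 - th * exp (- (4/e))) * (L / e))"
    by (rule mult_left_mono) (use e in simp)
  also have "\<dots> = lamb e * L" unfolding lamb_def th using e by (simp add: field_simps)
  finally have "e * (ln X - ln r) \<le> lamb e * L" .
  then show ?thesis using lo unfolding X_def[symmetric] by (simp add: algebra_simps)
qed

context ctx begin
interpretation P: prob_space M by (rule M_prob)

lemma G_contr:
  assumes f1: "\<phi>1 \<in> borel_measurable M" and b1: "\<And>x. \<bar>\<phi>1 x\<bar> \<le> B1"
    and f2: "\<phi>2 \<in> borel_measurable M" and b2: "\<And>x. \<bar>\<phi>2 x\<bar> \<le> B2"
    and d: "\<And>x. a \<le> \<phi>1 x - \<phi>2 x \<and> \<phi>1 x - \<phi>2 x \<le> a + L"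
    and L: "0 \<le> L" "L \<le> 4"
  shows "\<exists>b. \<forall>y. b \<le> ctrans_X c e M \<phi>1 y - ctrans_X c e M \<phi>2 y \<and>
                  ctrans_X c e M \<phi>1 y - ctrans_X c e M \<phi>2 y \<le> b + lamb e * L"
proof -
  note f1[measurable] f2[measurable]
  define v where "v x = exp (\<phi>2 x / e)" for x
  define u where "u x = exp ((\<phi>1 x - \<phi>2 x - a) / e)" for x
  define Mx where "Mx = exp (L / e)"
  define th where "th = exp (-2/e)"
  define e1 where "e1 = exp (-1/e)"
  define E where "E = exp (1/e)"
  define V where "V = (\<integral>x. v x \<partial>M)"
  define P where "P = (\<integral>x. v x * u x \<partial>M)"
  have v0: "0 < v x" for x by (simp add: v_def)
  have u1: "1 \<le> u x" for x using d[of x] e_pos by (simp add: u_def)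
  have uM: "u x \<le> Mx" for x using d[of x] e_pos unfolding u_def Mx_def by (simp add: divide_right_mono)
  have vu: "v x * u x = exp ((\<phi>1 x - a) / e)" for x
    unfolding v_def u_def by (simp add: mult_exp_exp add_divide_distrib diff_divide_distrib)
  have int_v: "integrable M v" unfolding v_def by (rule intZ[OF f2 b2])
  have int_vu: "integrable M (\<lambda>x. v x * u x)" unfolding vu
  proof (rule int_exp)
    show "(\<lambda>x. (\<phi>1 x - a) / e) \<in> borel_measurable M" by measurable
    fix x show "\<bar>(\<phi>1 x - a) / e\<bar> \<le> (B1 + \<bar>a\<bar>) / e"
      using b1[of x] e_pos by (simp add: abs_divide divide_right_mono abs_triangle_ineq4 order_trans[OF abs_triangle_ineq4])
  qed
  have V_eq: "V = Z \<phi>2" unfolding V_def Z_def v_def ..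
  have V0: "0 < V" unfolding V_eq by (rule Z_pos[OF f2 b2])
  have VP: "V \<le> P" unfolding V_def P_def
  proof (rule integral_mono[OF int_v int_vu])
    fix x show "v x \<le> v x * u x" using mult_left_mono[OF u1[of x], of "v x"] v0[of x] by simp
  qed
  have PV: "P \<le> Mx * V" unfolding V_def P_def
  proof -
    have "(\<integral>x. v x * u x \<partial>M) \<le> (\<integral>x. Mx * v x \<partial>M)"
      by (rule integral_mono[OF int_vu]) (use int_v v0 uM in \<open>auto simp: mult.commute intro: mult_left_mono\<close>)
    then show "(\<integral>x. v x * u x \<partial>M) \<le> Mx * (\<integral>x. v x \<partial>M)" by simp
  qed
  define p where "p = P / V"
  have p1: "1 \<le> p" using VP V0 by (simp add: p_def)
  have pM: "p \<le> Mx" using PV V0 by (simp add: p_def divide_simps mult.commute)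
  define b where "b = - a - e * ln (Mx - th * (Mx - p))"
  show ?thesis
  proof (intro exI allI)
    fix y
    define k where "k x = exp (- c (x, y) / e)" for x
    have k1: "e1 \<le> k x" for x using c_bd[of x y] e_pos unfolding k_def e1_def
      by (simp add: divide_right_mono abs_le_iff)
    have eqW: "exp ((\<phi>2 x - c (x, y)) / e) = v x * k x" for x
      unfolding v_def k_def by (simp add: mult_exp_exp diff_divide_distrib)
    have eqU: "exp ((\<phi>1 x - c (x, y)) / e) = exp (a/e) * (v x * k x * u x)" for x
      unfolding v_def k_def u_def by (simp add: mult_exp_exp diff_divide_distrib add_divide_distrib)
    define W where "W = (\<integral>x. v x * k x \<partial>M)"
    define U where "U = (\<integral>x. v x * k x * u x \<partial>M)"
    have int_W: "integrable M (\<lambda>x. v x * k x)" using intJ[OF f2 b2, of y] unfolding eqW .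
    have int_U: "integrable M (\<lambda>x. v x * k x * u x)"
      using intJ[OF f1 b1, of y] unfolding eqU by simp
    have JW: "J \<phi>2 y = W" unfolding J_def W_def eqW ..
    have JU: "J \<phi>1 y = exp (a/e) * U" unfolding J_def U_def eqU by simp
    have W0: "0 < W" using J_pos[OF f2 b2, of y] JW by simp
    have WV: "W \<le> E * V" using J_bounds(2)[OF f2 b2, of y] JW V_eq E_def by simp
    have h1: "e1 * (P - V) \<le> U - W"
    proof -
      have "(\<integral>x. e1 * (v x * u x - v x) \<partial>M) \<le> (\<integral>x. v x * k x * u x - v x * k x \<partial>M)"
      proof (rule integral_mono)
        show "integrable M (\<lambda>x. e1 * (v x * u x - v x))" using int_v int_vu by auto
        show "integrable M (\<lambda>x. v x * k x * u x - v x * k x)" using int_U int_W by auto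
        fix x
        have "0 \<le> v x * (u x - 1)" using v0[of x] u1[of x] by simp
        then have "e1 * (v x * (u x - 1)) \<le> k x * (v x * (u x - 1))" using k1[of x] by (intro mult_right_mono)
        then show "e1 * (v x * u x - v x) \<le> v x * k x * u x - v x * k x" by (simp add: algebra_simps)
      qed
      then show ?thesis using int_v int_vu int_U int_W by (simp add: U_def W_def P_def V_def)
    qed
    have h2: "e1 * (Mx * V - P) \<le> Mx * W - U"
    proof -
      have "(\<integral>x. e1 * (Mx * v x - v x * u x) \<partial>M) \<le> (\<integral>x. Mx * (v x * k x) - v x * k x * u x \<partial>M)"
      proof (rule integral_mono)
        show "integrable M (\<lambda>x. e1 * (Mx * v x - v x * u x))" using int_v int_vu by auto
        show "integrable M (\<lambda>x. Mx * (v x * k x) - v x * k x * u x)" using int_U int_W by auto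
        fix x
        have "0 \<le> v x * (Mx - u x)" using v0[of x] uM[of x] by simp
        then have "e1 * (v x * (Mx - u x)) \<le> k x * (v x * (Mx - u x))" using k1[of x] by (intro mult_right_mono)
        then show "e1 * (Mx * v x - v x * u x) \<le> Mx * (v x * k x) - v x * k x * u x" by (simp add: algebra_simps)
      qed
      then show ?thesis using int_v int_vu int_U int_W by (simp add: U_def W_def P_def V_def)
    qed
    have eE: "e1 * E = 1" unfolding e1_def E_def by (simp add: mult_exp_exp)
    have rr: "1 + e1 * e1 * (P / V - 1) \<le> U / W" "U / W \<le> Mx - e1 * e1 * (Mx - P / V)"
      using realC[OF V0 W0 _ eE WV h1 h2 VP PV] by (auto simp: e1_def)
    have the: "e1 * e1 = th" unfolding e1_def th_def by (simp add: mult_exp_exp)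
    have U0: "0 < U" using rr(1) p1 W0 the th_def p_def
      by (smt (verit) divide_nonpos_pos exp_gt_zero mult_nonneg_nonneg)
    have diff: "ctrans_X c e M \<phi>1 y - ctrans_X c e M \<phi>2 y = - a - e * ln (U / W)"
      unfolding G_eq JU JW using U0 W0 e_pos by (simp add: ln_mult ln_div algebra_simps)
    have D: "- a - e * ln (Mx - th * (Mx - p)) \<le> - a - e * ln (U / W) \<and>
         - a - e * ln (U / W) \<le> (- a - e * ln (Mx - th * (Mx - p))) + lamb e * L"
      by (rule realD[OF e_pos th_def Mx_def L p1 pM]) (use rr the in \<open>auto simp: p_def\<close>)
    show "b \<le> ctrans_X c e M \<phi>1 y - ctrans_X c e M \<phi>2 y \<and>
          ctrans_X c e M \<phi>1 y - ctrans_X c e M \<phi>2 y \<le> b + lamb e * L"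
      unfolding diff b_def using D by simp
  qed
qed

end

lemma tlog_bound: "0 \<le> (t::real) \<Longrightarrow> t * max 0 (- ln t) \<le> 1"
proof -
  assume t: "0 \<le> t"
  show ?thesis
  proof (cases "t = 0")
    case True then show ?thesis by simp
  next
    case False
    then have t0: "0 < t" using t by simp
    show ?thesis
    proof (cases "t \<le> 1")
      case True
      have "ln (1/t) \<le> 1/t - 1" using t0 by (intro ln_le_minus_one) simp
      then have "- ln t \<le> 1/t - 1" using t0 by (simp add: ln_div)
      then have "t * (- ln t) \<le> t * (1/t - 1)" using t0 by (intro mult_left_mono) auto
      also have "\<dots> = 1 - t" using t0 by (simp add: field_simps)
      finally have "t * (- ln t) \<le> 1" using t0 by simp
      then show ?thesis using t by (simp add: max_def)
    next
      case False
      then have "0 \<le> ln t" by simp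
      then show ?thesis by (simp add: max_def)
    qed
  qed
qed

locale pctx =
  fixes c :: "'a::topological_space \<times> 'b::topological_space \<Rightarrow> real" and e :: real
    and \<mu> :: "'a measure" and \<nu> :: "'b measure"
  assumes c_meas: "c \<in> borel_measurable (borel \<Otimes>\<^sub>M borel)"
    and c_bd: "\<And>x y. \<bar>c (x, y)\<bar> \<le> 1"
    and e_pos: "0 < e" and mu_prob: "prob_space \<mu>" and mu_sets: "sets \<mu> = sets borel"
    and nu_prob: "prob_space \<nu>" and nu_sets: "sets \<nu> = sets borel"
begin

sublocale X: ctx c e \<mu>
  by (rule ctx.intro[OF c_meas c_bd e_pos mu_prob mu_sets])

lemma c_swap_meas: "(\<lambda>(y, x). c (x, y)) \<in> borel_measurable (borel \<Otimes>\<^sub>M borel)"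
  using measurable_pair_swap[OF c_meas] by simp

sublocale Y: ctx "\<lambda>(y, x). c (x, y)" e \<nu>
  by (rule ctx.intro[OF c_swap_meas _ e_pos nu_prob nu_sets]) (simp add: c_bd)

interpretation PP: pair_prob_space \<mu> \<nu>
  by (rule pair_prob_space.intro[OF pair_sigma_finite.intro]) (use mu_prob nu_prob prob_space_imp_sigma_finite in blast)+

lemma ctY: "ctrans_Y c e \<nu> \<psi> = ctrans_X (\<lambda>(y, x). c (x, y)) e \<nu> \<psi>"
  by (rule ext) (simp add: ctrans_Y_def ctrans_X_def)

lemma sets_rho: "sets (\<mu> \<Otimes>\<^sub>M \<nu>) = sets (borel \<Otimes>\<^sub>M borel)"
  by (rule sets_pair_measure_cong[OF mu_sets nu_sets])

lemma space_rho: "space (\<mu> \<Otimes>\<^sub>M \<nu>) = UNIV"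
  using sets_eq_imp_space_eq[OF sets_rho] by (simp add: space_pair_measure)

lemma c_rho: "c \<in> borel_measurable (\<mu> \<Otimes>\<^sub>M \<nu>)"
  using c_meas measurable_cong_sets[OF sets_rho refl] by blast

lemma mu_meas: "f \<in> borel_measurable borel \<Longrightarrow> f \<in> borel_measurable \<mu>"
  using measurable_cong_sets[OF mu_sets refl] by blast
lemma nu_meas: "f \<in> borel_measurable borel \<Longrightarrow> f \<in> borel_measurable \<nu>"
  using measurable_cong_sets[OF nu_sets refl] by blast

lemma coupling_props:
  assumes "\<pi> \<in> couplings \<mu> \<nu>"
  shows "prob_space \<pi>" "sets \<pi> = sets (\<mu> \<Otimes>\<^sub>M \<nu>)" "distr \<pi> \<mu> fst = \<mu>" "distr \<pi> \<nu> snd = \<nu>"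
  using assms by (auto simp: couplings_def)

lemma marg_integrals:
  fixes \<phi> :: "'a \<Rightarrow> real" and \<psi> :: "'b \<Rightarrow> real"
  assumes pi: "\<pi> \<in> couplings \<mu> \<nu>"
    and f: "\<phi> \<in> borel_measurable borel" and g: "\<psi> \<in> borel_measurable borel"
  shows "(\<integral>z. \<phi> (fst z) \<partial>\<pi>) = (\<integral>x. \<phi> x \<partial>\<mu>)" "(\<integral>z. \<psi> (snd z) \<partial>\<pi>) = (\<integral>y. \<psi> y \<partial>\<nu>)"
proof -
  have fst: "fst \<in> measurable \<pi> \<mu>"
    using measurable_cong_sets[OF coupling_props(2)[OF pi] refl] by auto
  have snd: "snd \<in> measurable \<pi> \<nu>"
    using measurable_cong_sets[OF coupling_props(2)[OF pi] refl] by auto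
  have "(\<integral>x. \<phi> x \<partial>\<mu>) = (\<integral>x. \<phi> x \<partial>(distr \<pi> \<mu> fst))" using coupling_props(3)[OF pi] by simp
  also have "\<dots> = (\<integral>z. \<phi> (fst z) \<partial>\<pi>)" by (rule integral_distr[OF fst mu_meas[OF f]])
  finally show "(\<integral>z. \<phi> (fst z) \<partial>\<pi>) = (\<integral>x. \<phi> x \<partial>\<mu>)" ..
  have "(\<integral>y. \<psi> y \<partial>\<nu>) = (\<integral>y. \<psi> y \<partial>(distr \<pi> \<nu> snd))" using coupling_props(4)[OF pi] by simp
  also have "\<dots> = (\<integral>z. \<psi> (snd z) \<partial>\<pi>)" by (rule integral_distr[OF snd nu_meas[OF g]])
  finally show "(\<integral>z. \<psi> (snd z) \<partial>\<pi>) = (\<integral>y. \<psi> y \<partial>\<nu>)" ..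
qed

lemma cost_split:
  fixes \<phi> :: "'a \<Rightarrow> real" and \<psi> :: "'b \<Rightarrow> real"
  assumes pi: "\<pi> \<in> couplings \<mu> \<nu>"
    and f: "\<phi> \<in> borel_measurable borel" and bf: "\<And>x. \<bar>\<phi> x\<bar> \<le> B1"
    and g: "\<psi> \<in> borel_measurable borel" and bg: "\<And>y. \<bar>\<psi> y\<bar> \<le> B2"
  shows "(\<integral>z. c z \<partial>\<pi>) + e * (\<integral>z. (\<phi> (fst z) + \<psi> (snd z) - c z) / e \<partial>\<pi>)
         = (\<integral>x. \<phi> x \<partial>\<mu>) + (\<integral>y. \<psi> y \<partial>\<nu>)"
proof -
  interpret Q: prob_space \<pi> using coupling_props(1)[OF pi] .
  have eqm: "borel_measurable \<pi> = borel_measurable (borel \<Otimes>\<^sub>M borel)"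
    using coupling_props(2)[OF pi] sets_rho by (intro measurable_cong_sets) auto
  have cm: "c \<in> borel_measurable \<pi>" unfolding eqm by (rule c_meas)
  have fm: "(\<lambda>z. \<phi> (fst z)) \<in> borel_measurable \<pi>" unfolding eqm using f by measurable
  have gm: "(\<lambda>z. \<psi> (snd z)) \<in> borel_measurable \<pi>" unfolding eqm using g by measurable
  have ic: "integrable \<pi> c" using cm c_bd by (intro Q.integrable_const_bound[where B=1]) (auto simp: split_beta')
  have iF: "integrable \<pi> (\<lambda>z. \<phi> (fst z))" using fm bf by (intro Q.integrable_const_bound[where B=B1]) auto
  have iG: "integrable \<pi> (\<lambda>z. \<psi> (snd z))" using gm bg by (intro Q.integrable_const_bound[where B=B2]) auto
  have "e * (\<integral>z. (\<phi> (fst z) + \<psi> (snd z) - c z) / e \<partial>\<pi>) = (\<integral>z. (\<phi> (fst z) + \<psi> (snd z) - c z) \<partial>\<pi>)"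
    using e_pos by simp
  also have "\<dots> = (\<integral>z. \<phi> (fst z) \<partial>\<pi>) + (\<integral>z. \<psi> (snd z) \<partial>\<pi>) - (\<integral>z. c z \<partial>\<pi>)"
    using ic iF iG by simp
  finally show ?thesis using marg_integrals[OF pi f g] by simp
qed

end

context pctx begin

lemma rho_prob: "prob_space (\<mu> \<Otimes>\<^sub>M \<nu>)"
  by (rule prob_space_pair[OF mu_prob nu_prob])

lemma g_meas:
  fixes \<phi> :: "'a \<Rightarrow> real" and \<psi> :: "'b \<Rightarrow> real"
  assumes f: "\<phi> \<in> borel_measurable borel" and g: "\<psi> \<in> borel_measurable borel"
  shows "(\<lambda>z. (\<phi> (fst z) + \<psi> (snd z) - c z) / e) \<in> borel_measurable (\<mu> \<Otimes>\<^sub>M \<nu>)"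
proof -
  note mu_meas[OF f, measurable] nu_meas[OF g, measurable] c_rho[measurable]
  show ?thesis by measurable
qed

lemma psi_props:
  fixes \<phi> :: "'a \<Rightarrow> real"
  assumes f: "\<phi> \<in> borel_measurable borel" and b: "\<And>x. \<bar>\<phi> x\<bar> \<le> B"
  shows "ctrans_X c e \<mu> \<phi> \<in> borel_measurable borel"
    "\<And>y. \<bar>ctrans_X c e \<mu> \<phi> y\<bar> \<le> \<bar>e * ln (X.Z \<phi>)\<bar> + 1"
proof -
  show "ctrans_X c e \<mu> \<phi> \<in> borel_measurable borel" by (rule X.G_meas[OF mu_meas[OF f]])
  fix y show "\<bar>ctrans_X c e \<mu> \<phi> y\<bar> \<le> \<bar>e * ln (X.Z \<phi>)\<bar> + 1"
    using X.G_bounds[OF mu_meas[OF f] b, of y] by linarith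
qed

lemma ONE:
  fixes \<phi> :: "'a \<Rightarrow> real"
  assumes f: "\<phi> \<in> borel_measurable borel" and b: "\<And>x. \<bar>\<phi> x\<bar> \<le> B"
  shows "(\<integral>\<^sup>+z. ennreal (exp ((\<phi> (fst z) + ctrans_X c e \<mu> \<phi> (snd z) - c z) / e)) \<partial>(\<mu> \<Otimes>\<^sub>M \<nu>)) = 1"
proof -
  interpret PP: pair_prob_space \<mu> \<nu>
    by (rule pair_prob_space.intro[OF pair_sigma_finite.intro]) (use mu_prob nu_prob prob_space_imp_sigma_finite in blast)+
  have gm: "(\<lambda>z. (\<phi> (fst z) + ctrans_X c e \<mu> \<phi> (snd z) - c z) / e) \<in> borel_measurable (\<mu> \<Otimes>\<^sub>M \<nu>)"
    by (rule g_meas[OF f psi_props(1)[OF f b]])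
  have F: "(\<lambda>z. ennreal (exp ((\<phi> (fst z) + ctrans_X c e \<mu> \<phi> (snd z) - c z) / e))) \<in> borel_measurable (\<mu> \<Otimes>\<^sub>M \<nu>)"
    using gm by measurable
  have "(\<integral>\<^sup>+z. ennreal (exp ((\<phi> (fst z) + ctrans_X c e \<mu> \<phi> (snd z) - c z) / e)) \<partial>(\<mu> \<Otimes>\<^sub>M \<nu>))
     = (\<integral>\<^sup>+y. (\<integral>\<^sup>+x. ennreal (exp ((\<phi> x + ctrans_X c e \<mu> \<phi> y - c (x, y)) / e)) \<partial>\<mu>) \<partial>\<nu>)"
    using PP.nn_integral_snd[OF F] by simp
  also have "\<dots> = (\<integral>\<^sup>+y. 1 \<partial>\<nu>)"
    using X.G_one[OF mu_meas[OF f] b] by simp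
  also have "\<dots> = 1" using prob_space.emeasure_space_1[OF nu_prob] by simp
  finally show ?thesis .
qed

lemma weak:
  fixes \<phi> :: "'a \<Rightarrow> real"
  assumes f: "\<phi> \<in> borel_measurable borel" and b: "\<And>x. \<bar>\<phi> x\<bar> \<le> B"
    and pi: "\<pi> \<in> couplings \<mu> \<nu>"
  shows "ereal ((\<integral>x. \<phi> x \<partial>\<mu>) + (\<integral>y. ctrans_X c e \<mu> \<phi> y \<partial>\<nu>))
         \<le> ereal (\<integral>z. c z \<partial>\<pi>) + ereal e * KL \<pi> (\<mu> \<Otimes>\<^sub>M \<nu>)"
proof -
  define \<rho> where "\<rho> = \<mu> \<Otimes>\<^sub>M \<nu>"
  define \<psi> where "\<psi> = ctrans_X c e \<mu> \<phi>"
  have pm: "\<psi> \<in> borel_measurable borel" unfolding \<psi>_def by (rule psi_props(1)[OF f b])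
  have pb: "\<And>y. \<bar>\<psi> y\<bar> \<le> \<bar>e * ln (X.Z \<phi>)\<bar> + 1" unfolding \<psi>_def by (rule psi_props(2)[OF f b])
  define g where "g z = (\<phi> (fst z) + \<psi> (snd z) - c z) / e" for z
  have split: "(\<integral>z. c z \<partial>\<pi>) + e * (\<integral>z. g z \<partial>\<pi>) = (\<integral>x. \<phi> x \<partial>\<mu>) + (\<integral>y. \<psi> y \<partial>\<nu>)"
    unfolding g_def by (rule cost_split[OF pi f b pm pb])
  interpret Q: prob_space \<pi> using coupling_props(1)[OF pi] .
  interpret R: prob_space \<rho> unfolding \<rho>_def by (rule rho_prob)
  have sp: "sets \<pi> = sets \<rho>" using coupling_props(2)[OF pi] by (simp add: \<rho>_def)
  have eqm: "borel_measurable \<pi> = borel_measurable \<rho>" by (rule measurable_cong_sets[OF sp refl])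
  have gm: "g \<in> borel_measurable \<rho>" unfolding g_def \<rho>_def by (rule g_meas[OF f pm])
  have gmp: "g \<in> borel_measurable \<pi>" unfolding eqm by (rule gm)
  have gb: "\<bar>g z\<bar> \<le> (B + (\<bar>e * ln (X.Z \<phi>)\<bar> + 1) + 1) / e" for z
  proof -
    have "\<bar>\<phi> (fst z) + \<psi> (snd z) - c z\<bar> \<le> B + (\<bar>e * ln (X.Z \<phi>)\<bar> + 1) + 1"
      using b[of "fst z"] pb[of "snd z"] c_bd[of "fst z" "snd z"] by simp
    then show ?thesis unfolding g_def using e_pos by (simp add: abs_divide divide_right_mono)
  qed
  have ig: "integrable \<pi> g"
    by (rule Q.integrable_const_bound[OF _ gmp, where B="(B + (\<bar>e * ln (X.Z \<phi>)\<bar> + 1) + 1) / e"]) (use gb in simp)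
  have one: "(\<integral>\<^sup>+z. ennreal (exp (g z)) \<partial>\<rho>) = 1"
    unfolding g_def \<psi>_def \<rho>_def by (rule ONE[OF f b])
  show ?thesis
  proof (cases "absolutely_continuous \<rho> \<pi>")
    case False
    then have "KL \<pi> (\<mu> \<Otimes>\<^sub>M \<nu>) = \<infinity>" by (simp add: KL_def \<rho>_def)
    then show ?thesis using e_pos by simp
  next
    case ac: True
    define f where "f = RN_deriv \<rho> \<pi>"
    define L where "L z = ln (enn2real (f z))" for z
    have fm: "f \<in> borel_measurable \<rho>" unfolding f_def by simp
    have Lm: "L \<in> borel_measurable \<rho>" unfolding L_def using fm by measurable
    have Lmp: "L \<in> borel_measurable \<pi>" unfolding eqm by (rule Lm)
    define Pp where "Pp = (\<integral>\<^sup>+ z. ennreal (max 0 (L z)) \<partial>\<pi>)"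
    define Nn where "Nn = (\<integral>\<^sup>+ z. ennreal (max 0 (- L z)) \<partial>\<pi>)"
    have KL: "KL \<pi> (\<mu> \<Otimes>\<^sub>M \<nu>) = enn2ereal Pp - enn2ereal Nn"
      using ac sp unfolding KL_def Pp_def Nn_def L_def f_def \<rho>_def by simp
    have "Nn = (\<integral>\<^sup>+ z. f z * ennreal (max 0 (- L z)) \<partial>\<rho>)"
      unfolding Nn_def f_def by (rule R.RN_deriv_nn_integral[OF ac sp]) (use Lm in measurable)
    also have "\<dots> \<le> (\<integral>\<^sup>+ z. 1 \<partial>\<rho>)"
    proof (rule nn_integral_mono)
      fix z show "f z * ennreal (max 0 (- L z)) \<le> 1"
      proof (cases "f z")
        case (real t)
        then have "f z * ennreal (max 0 (- L z)) = ennreal (t * max 0 (- ln t))"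
          by (simp add: L_def ennreal_mult)
        also have "\<dots> \<le> 1" using tlog_bound[OF real(1)] by simp
        finally show ?thesis .
      next
        case top then show ?thesis by (simp add: L_def)
      qed
    qed
    also have "\<dots> = 1" using R.emeasure_space_1 by simp
    finally have Nn1: "Nn \<le> 1" .
    then have Nnf: "Nn < \<infinity>" by (simp add: order_le_less_trans)
    show ?thesis
    proof (cases "Pp = \<infinity>")
      case True
      then have "KL \<pi> (\<mu> \<Otimes>\<^sub>M \<nu>) = \<infinity>" unfolding KL using Nnf by (cases Nn) auto
      then show ?thesis using e_pos by simp
    next
      case False
      then have Ppf: "Pp < \<infinity>" by (simp add: top.not_eq_extremum)
      have iL: "integrable \<pi> L"
      proof (rule integrableI_bounded[OF Lmp])
        have "(\<integral>\<^sup>+ z. ennreal (norm (L z)) \<partial>\<pi>) = (\<integral>\<^sup>+ z. ennreal (max 0 (L z)) + ennreal (max 0 (- L z)) \<partial>\<pi>)"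
        proof (intro nn_integral_cong)
          fix z
          have "ennreal (max 0 (L z)) + ennreal (max 0 (- L z)) = ennreal (max 0 (L z) + max 0 (- L z))"
            by (rule ennreal_plus[symmetric]) auto
          moreover have "max 0 (L z) + max 0 (- L z) = norm (L z)" by (simp add: max_def)
          ultimately show "ennreal (norm (L z)) = ennreal (max 0 (L z)) + ennreal (max 0 (- L z))" by simp
        qed
        also have "\<dots> = Pp + Nn" unfolding Pp_def Nn_def using Lmp by (intro nn_integral_add) auto
        finally show "(\<integral>\<^sup>+ z. ennreal (norm (L z)) \<partial>\<pi>) < \<infinity>" using Ppf Nnf by simp
      qed
      have intL: "(\<integral>z. L z \<partial>\<pi>) = enn2real Pp - enn2real Nn"
        unfolding real_lebesgue_integral_def[OF iL] Pp_def Nn_def by (simp add: ennreal_max_0)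
      have KL2: "KL \<pi> (\<mu> \<Otimes>\<^sub>M \<nu>) = ereal (\<integral>z. L z \<partial>\<pi>)"
      proof -
        have "Pp = ennreal (enn2real Pp)" using Ppf by simp
        moreover have "Nn = ennreal (enn2real Nn)" using Nnf by simp
        ultimately have "enn2ereal Pp - enn2ereal Nn = ereal (enn2real Pp) - ereal (enn2real Nn)"
          by (metis enn2ereal_ennreal enn2real_nonneg)
        then show ?thesis unfolding KL intL by simp
      qed
      define h where "h z = g z - L z" for z
      have hm: "h \<in> borel_measurable \<rho>" unfolding h_def using gm Lm by measurable
      have hmp: "h \<in> borel_measurable \<pi>" unfolding eqm by (rule hm)
      have ih: "integrable \<pi> h" unfolding h_def using ig iL by simp
      have fin: "AE z in \<rho>. f z \<noteq> \<infinity>" unfolding f_def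
        by (rule R.RN_deriv_finite[OF _ ac sp]) (rule Q.sigma_finite_measure_axioms)
      have "(\<integral>\<^sup>+ z. ennreal (exp (h z)) \<partial>\<pi>) = (\<integral>\<^sup>+ z. f z * ennreal (exp (h z)) \<partial>\<rho>)"
        unfolding f_def by (rule R.RN_deriv_nn_integral[OF ac sp]) (use hm in measurable)
      also have "\<dots> \<le> (\<integral>\<^sup>+ z. ennreal (exp (g z)) \<partial>\<rho>)"
      proof (rule nn_integral_mono_AE)
        show "AE z in \<rho>. f z * ennreal (exp (h z)) \<le> ennreal (exp (g z))"
          using fin
        proof eventually_elim
          fix z assume fz: "f z \<noteq> \<infinity>"
          show "f z * ennreal (exp (h z)) \<le> ennreal (exp (g z))"
          proof (cases "f z")
            case (real t)
            show ?thesis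
            proof (cases "t = 0")
              case True then show ?thesis using real by simp
            next
              case False
              then have t0: "0 < t" using real by simp
              have "t * exp (h z) = exp (g z)"
                unfolding h_def L_def using real t0 by (simp add: exp_diff)
              then show ?thesis using real t0 by (simp add: ennreal_mult[symmetric])
            qed
          next
            case top then show ?thesis using fz by simp
          qed
        qed
      qed
      also have "\<dots> = 1" by (rule one)
      finally have eh1: "(\<integral>\<^sup>+ z. ennreal (exp (h z)) \<partial>\<pi>) \<le> 1" .
      have ieh: "integrable \<pi> (\<lambda>z. exp (h z))"
        by (rule integrableI_nonneg) (use hmp eh1 in \<open>auto simp: order_le_less_trans\<close>)
      have "ennreal (\<integral>z. exp (h z) \<partial>\<pi>) = (\<integral>\<^sup>+ z. ennreal (exp (h z)) \<partial>\<pi>)"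
        by (rule nn_integral_eq_integral[OF ieh, symmetric]) simp
      then have "ennreal (\<integral>z. exp (h z) \<partial>\<pi>) \<le> 1" using eh1 by simp
      then have ie1: "(\<integral>z. exp (h z) \<partial>\<pi>) \<le> 1" by simp
      have "(\<integral>z. h z \<partial>\<pi>) \<le> (\<integral>z. exp (h z) - 1 \<partial>\<pi>)"
      proof (rule integral_mono[OF ih])
        show "integrable \<pi> (\<lambda>z. exp (h z) - 1)" using ieh by simp
        fix z show "h z \<le> exp (h z) - 1" using exp_ge_add_one_self[of "h z"] by linarith
      qed
      also have "\<dots> = (\<integral>z. exp (h z) \<partial>\<pi>) - 1" using ieh Q.prob_space by simp
      finally have "(\<integral>z. h z \<partial>\<pi>) \<le> 0" using ie1 by simp
      then have gL: "(\<integral>z. g z \<partial>\<pi>) \<le> (\<integral>z. L z \<partial>\<pi>)" unfolding h_def using ig iL by simp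
      have "(\<integral>x. \<phi> x \<partial>\<mu>) + (\<integral>y. \<psi> y \<partial>\<nu>) \<le> (\<integral>z. c z \<partial>\<pi>) + e * (\<integral>z. L z \<partial>\<pi>)"
        using split gL e_pos by (smt (verit) mult_left_mono)
      then show ?thesis unfolding KL2 \<psi>_def by simp
    qed
  qed
qed

end

context pctx begin

lemma strong:
  fixes \<phi> :: "'a \<Rightarrow> real" and \<psi> :: "'b \<Rightarrow> real"
  assumes f: "\<phi> \<in> borel_measurable borel" and bf: "\<And>x. \<bar>\<phi> x\<bar> \<le> B1"
    and g: "\<psi> \<in> borel_measurable borel" and bg: "\<And>y. \<bar>\<psi> y\<bar> \<le> B2"
    and hpsi: "\<And>y. ctrans_X c e \<mu> \<phi> y = \<psi> y" and hphi: "\<And>x. ctrans_Y c e \<nu> \<psi> x = \<phi> x"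
  shows "OT c e \<mu> \<nu> \<le> ereal ((\<integral>x. \<phi> x \<partial>\<mu>) + (\<integral>y. \<psi> y \<partial>\<nu>))"
proof -
  interpret PP: pair_prob_space \<mu> \<nu>
    by (rule pair_prob_space.intro[OF pair_sigma_finite.intro]) (use mu_prob nu_prob prob_space_imp_sigma_finite in blast)+
  define \<rho> where "\<rho> = \<mu> \<Otimes>\<^sub>M \<nu>"
  interpret R: prob_space \<rho> unfolding \<rho>_def by (rule rho_prob)
  define gg where "gg z = (\<phi> (fst z) + \<psi> (snd z) - c z) / e" for z
  define G where "G z = ennreal (exp (gg z))" for z
  have ggm: "gg \<in> borel_measurable \<rho>" unfolding gg_def \<rho>_def by (rule g_meas[OF f g])
  have Gm: "G \<in> borel_measurable \<rho>" unfolding G_def using ggm by measurable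
  define \<pi> where "\<pi> = density \<rho> G"
  have sp: "sets \<pi> = sets \<rho>" by (simp add: \<pi>_def)
  have spr: "space \<rho> = UNIV" unfolding \<rho>_def by (rule space_rho)
  have spp: "space \<pi> = UNIV" using spr by (simp add: \<pi>_def)
  have fstm: "fst \<in> measurable \<pi> \<mu>"
    using measurable_cong_sets[OF sp refl] unfolding \<rho>_def by auto
  have sndm: "snd \<in> measurable \<pi> \<nu>"
    using measurable_cong_sets[OF sp refl] unfolding \<rho>_def by auto
  have one_x: "(\<integral>\<^sup>+y. G (x, y) \<partial>\<nu>) = 1" for x
  proof -
    have "(\<integral>\<^sup>+y. ennreal (exp ((\<psi> y + ctrans_X (\<lambda>(y, x). c (x, y)) e \<nu> \<psi> x - (\<lambda>(y, x). c (x, y)) (y, x)) / e)) \<partial>\<nu>) = 1"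
      by (rule Y.G_one[OF nu_meas[OF g] bg])
    moreover have "\<And>y. (\<psi> y + ctrans_X (\<lambda>(y, x). c (x, y)) e \<nu> \<psi> x - (\<lambda>(y, x). c (x, y)) (y, x)) / e = gg (x, y)"
      unfolding gg_def using hphi[of x] ctY by (simp add: algebra_simps)
    ultimately show ?thesis unfolding G_def by simp
  qed
  have one_y: "(\<integral>\<^sup>+x. G (x, y) \<partial>\<mu>) = 1" for y
  proof -
    have "(\<integral>\<^sup>+x. ennreal (exp ((\<phi> x + ctrans_X c e \<mu> \<phi> y - c (x, y)) / e)) \<partial>\<mu>) = 1"
      by (rule X.G_one[OF mu_meas[OF f] bf])
    then show ?thesis unfolding G_def gg_def using hpsi by simp
  qed
  have m1: "distr \<pi> \<mu> fst = \<mu>"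
  proof (rule measure_eqI)
    show "sets (distr \<pi> \<mu> fst) = sets \<mu>" by simp
    fix A assume "A \<in> sets (distr \<pi> \<mu> fst)"
    then have A: "A \<in> sets \<mu>" by simp
    have A2: "fst -` A \<inter> space \<rho> \<in> sets \<rho>" unfolding \<rho>_def using A by (rule measurable_sets[OF measurable_fst])
    have "emeasure (distr \<pi> \<mu> fst) A = emeasure \<pi> (fst -` A \<inter> space \<pi>)"
      by (rule emeasure_distr[OF fstm A])
    also have "\<dots> = (\<integral>\<^sup>+z. G z * indicator (fst -` A \<inter> space \<rho>) z \<partial>\<rho>)"
      unfolding \<pi>_def using A2 Gm by (simp add: emeasure_density)
    also have "\<dots> = (\<integral>\<^sup>+z. G z * indicator A (fst z) \<partial>(\<mu> \<Otimes>\<^sub>M \<nu>))"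
      unfolding \<rho>_def by (intro nn_integral_cong) (simp add: space_rho indicator_def)
    also have "\<dots> = (\<integral>\<^sup>+x. \<integral>\<^sup>+y. G (x, y) * indicator A x \<partial>\<nu> \<partial>\<mu>)"
    proof -
      have "(\<lambda>z. G z * indicator A (fst z)) \<in> borel_measurable (\<mu> \<Otimes>\<^sub>M \<nu>)"
        using Gm A unfolding \<rho>_def by measurable
      from PP.M2.nn_integral_fst[OF this] show ?thesis by simp
    qed
    also have "\<dots> = (\<integral>\<^sup>+x. indicator A x \<partial>\<mu>)"
    proof (intro nn_integral_cong)
      fix x
      have "(\<integral>\<^sup>+y. G (x, y) * indicator A x \<partial>\<nu>) = (\<integral>\<^sup>+y. G (x, y) \<partial>\<nu>) * indicator A x"
      proof (rule nn_integral_multc)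
        have Gm': "G \<in> borel_measurable (\<mu> \<Otimes>\<^sub>M \<nu>)" using Gm unfolding \<rho>_def .
        show "(\<lambda>y. G (x, y)) \<in> borel_measurable \<nu>"
          using measurable_comp[OF measurable_Pair1'[of x \<mu> \<nu>] Gm'] by (simp add: comp_def X.space_M)
      qed
      then show "(\<integral>\<^sup>+y. G (x, y) * indicator A x \<partial>\<nu>) = indicator A x" using one_x by simp
    qed
    also have "\<dots> = emeasure \<mu> A" using A by simp
    finally show "emeasure (distr \<pi> \<mu> fst) A = emeasure \<mu> A" .
  qed
  have m2: "distr \<pi> \<nu> snd = \<nu>"
  proof (rule measure_eqI)
    show "sets (distr \<pi> \<nu> snd) = sets \<nu>" by simp
    fix A assume "A \<in> sets (distr \<pi> \<nu> snd)"
    then have A: "A \<in> sets \<nu>" by simp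
    have A2: "snd -` A \<inter> space \<rho> \<in> sets \<rho>" unfolding \<rho>_def using A by (rule measurable_sets[OF measurable_snd])
    have "emeasure (distr \<pi> \<nu> snd) A = emeasure \<pi> (snd -` A \<inter> space \<pi>)"
      by (rule emeasure_distr[OF sndm A])
    also have "\<dots> = (\<integral>\<^sup>+z. G z * indicator (snd -` A \<inter> space \<rho>) z \<partial>\<rho>)"
      unfolding \<pi>_def using A2 Gm by (simp add: emeasure_density)
    also have "\<dots> = (\<integral>\<^sup>+z. G z * indicator A (snd z) \<partial>(\<mu> \<Otimes>\<^sub>M \<nu>))"
      unfolding \<rho>_def by (intro nn_integral_cong) (simp add: space_rho indicator_def)
    also have "\<dots> = (\<integral>\<^sup>+y. \<integral>\<^sup>+x. G (x, y) * indicator A y \<partial>\<mu> \<partial>\<nu>)"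
    proof -
      have "(\<lambda>z. G z * indicator A (snd z)) \<in> borel_measurable (\<mu> \<Otimes>\<^sub>M \<nu>)"
        using Gm A unfolding \<rho>_def by measurable
      from PP.nn_integral_snd[OF this] show ?thesis by simp
    qed
    also have "\<dots> = (\<integral>\<^sup>+y. indicator A y \<partial>\<nu>)"
    proof (intro nn_integral_cong)
      fix y
      have "(\<integral>\<^sup>+x. G (x, y) * indicator A y \<partial>\<mu>) = (\<integral>\<^sup>+x. G (x, y) \<partial>\<mu>) * indicator A y"
      proof (rule nn_integral_multc)
        have Gm': "G \<in> borel_measurable (\<mu> \<Otimes>\<^sub>M \<nu>)" using Gm unfolding \<rho>_def .
        show "(\<lambda>x. G (x, y)) \<in> borel_measurable \<mu>"
          using measurable_comp[OF measurable_Pair2'[of y \<nu> \<mu>] Gm'] by (simp add: comp_def Y.space_M)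
      qed
      then show "(\<integral>\<^sup>+x. G (x, y) * indicator A y \<partial>\<mu>) = indicator A y" using one_y by simp
    qed
    also have "\<dots> = emeasure \<nu> A" using A by simp
    finally show "emeasure (distr \<pi> \<nu> snd) A = emeasure \<nu> A" .
  qed
  have pp: "prob_space \<pi>"
  proof
    have "emeasure \<pi> (space \<pi>) = emeasure (distr \<pi> \<mu> fst) (space \<mu>)"
      using emeasure_distr[OF fstm sets.top[of \<mu>]] spp by (simp add: X.space_M)
    also have "\<dots> = 1" unfolding m1 by (rule prob_space.emeasure_space_1[OF mu_prob])
    finally show "emeasure \<pi> (space \<pi>) = 1" .
  qed
  have pic: "\<pi> \<in> couplings \<mu> \<nu>"
    unfolding couplings_def using pp sp m1 m2 by (simp add: \<rho>_def)
  interpret Q: prob_space \<pi> by (rule pp)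
  have eqm: "borel_measurable \<pi> = borel_measurable \<rho>" by (rule measurable_cong_sets[OF sp refl])
  have ggmp: "gg \<in> borel_measurable \<pi>" unfolding eqm by (rule ggm)
  have ggb: "\<bar>gg z\<bar> \<le> (B1 + B2 + 1) / e" for z
  proof -
    have "\<bar>\<phi> (fst z) + \<psi> (snd z) - c z\<bar> \<le> B1 + B2 + 1"
      using bf[of "fst z"] bg[of "snd z"] c_bd[of "fst z" "snd z"] by simp
    then show ?thesis unfolding gg_def using e_pos by (simp add: abs_divide divide_right_mono)
  qed
  have igg: "integrable \<pi> gg"
    by (rule Q.integrable_const_bound[OF _ ggmp, where B="(B1 + B2 + 1) / e"]) (use ggb in simp)
  have igp: "integrable \<pi> (\<lambda>z. max 0 (gg z))" using igg by simp
  have ign: "integrable \<pi> (\<lambda>z. max 0 (- gg z))" using igg by simp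
  have ac: "absolutely_continuous \<rho> \<pi>" unfolding \<pi>_def by (rule absolutely_continuousI_density[OF Gm])
  have RN: "AE z in \<rho>. G z = RN_deriv \<rho> \<pi> z"
    unfolding \<pi>_def by (rule R.RN_deriv_unique[OF Gm refl])
  have AEL: "AE z in \<pi>. ln (enn2real (RN_deriv \<rho> \<pi> z)) = gg z"
  proof -
    have "AE z in \<rho>. 0 < G z \<longrightarrow> ln (enn2real (RN_deriv \<rho> \<pi> z)) = gg z"
      using RN
    proof eventually_elim
      fix z assume h: "G z = RN_deriv \<rho> \<pi> z"
      show "0 < G z \<longrightarrow> ln (enn2real (RN_deriv \<rho> \<pi> z)) = gg z"
        using h[symmetric] by (simp add: G_def)
    qed
    then have "AE z in density \<rho> G. ln (enn2real (RN_deriv \<rho> \<pi> z)) = gg z"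
      by (subst AE_density[OF Gm])
    then show ?thesis unfolding \<pi>_def .
  qed
  have Pp: "(\<integral>\<^sup>+ z. ennreal (max 0 (ln (enn2real (RN_deriv \<rho> \<pi> z)))) \<partial>\<pi>) = ennreal (\<integral>z. max 0 (gg z) \<partial>\<pi>)"
  proof -
    have "(\<integral>\<^sup>+ z. ennreal (max 0 (ln (enn2real (RN_deriv \<rho> \<pi> z)))) \<partial>\<pi>) = (\<integral>\<^sup>+ z. ennreal (max 0 (gg z)) \<partial>\<pi>)"
      using AEL by (intro nn_integral_cong_AE) auto
    also have "\<dots> = ennreal (\<integral>z. max 0 (gg z) \<partial>\<pi>)" by (rule nn_integral_eq_integral[OF igp]) simp
    finally show ?thesis .
  qed
  have Nn: "(\<integral>\<^sup>+ z. ennreal (max 0 (- ln (enn2real (RN_deriv \<rho> \<pi> z)))) \<partial>\<pi>) = ennreal (\<integral>z. max 0 (- gg z) \<partial>\<pi>)"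
  proof -
    have "(\<integral>\<^sup>+ z. ennreal (max 0 (- ln (enn2real (RN_deriv \<rho> \<pi> z)))) \<partial>\<pi>) = (\<integral>\<^sup>+ z. ennreal (max 0 (- gg z)) \<partial>\<pi>)"
      using AEL by (intro nn_integral_cong_AE) auto
    also have "\<dots> = ennreal (\<integral>z. max 0 (- gg z) \<partial>\<pi>)" by (rule nn_integral_eq_integral[OF ign]) simp
    finally show ?thesis .
  qed
  have KL: "KL \<pi> (\<mu> \<Otimes>\<^sub>M \<nu>) = ereal (\<integral>z. gg z \<partial>\<pi>)"
  proof -
    have "KL \<pi> (\<mu> \<Otimes>\<^sub>M \<nu>) = enn2ereal (ennreal (\<integral>z. max 0 (gg z) \<partial>\<pi>)) - enn2ereal (ennreal (\<integral>z. max 0 (- gg z) \<partial>\<pi>))"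
      using ac sp unfolding KL_def \<rho>_def[symmetric] Let_def Pp Nn by simp
    also have "\<dots> = ereal ((\<integral>z. max 0 (gg z) \<partial>\<pi>) - (\<integral>z. max 0 (- gg z) \<partial>\<pi>))"
      by (simp add: integral_nonneg_AE)
    also have "(\<integral>z. max 0 (gg z) \<partial>\<pi>) - (\<integral>z. max 0 (- gg z) \<partial>\<pi>) = (\<integral>z. max 0 (gg z) - max 0 (- gg z) \<partial>\<pi>)"
      using igp ign by simp
    also have "\<dots> = (\<integral>z. gg z \<partial>\<pi>)" by (intro Bochner_Integration.integral_cong refl) (simp add: max_def)
    finally show ?thesis .
  qed
  have cost: "(\<integral>z. c z \<partial>\<pi>) + e * (\<integral>z. gg z \<partial>\<pi>) = (\<integral>x. \<phi> x \<partial>\<mu>) + (\<integral>y. \<psi> y \<partial>\<nu>)"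
    unfolding gg_def by (rule cost_split[OF pic f bf g bg])
  have "OT c e \<mu> \<nu> \<le> ereal (\<integral>z. c z \<partial>\<pi>) + ereal e * KL \<pi> (\<mu> \<Otimes>\<^sub>M \<nu>)"
    unfolding OT_def by (rule INF_lower[OF pic])
  also have "\<dots> = ereal ((\<integral>x. \<phi> x \<partial>\<mu>) + (\<integral>y. \<psi> y \<partial>\<nu>))"
    unfolding KL cost[symmetric] by simp
  finally show ?thesis .
qed

end

lemma seq_lemma:
  fixes s :: "nat \<Rightarrow> real"
  assumes s0: "s 0 = 0" and d: "\<And>n. \<bar>s (Suc n) - s n\<bar> \<le> C * q ^ n" and q: "0 \<le> q" "q < 1"
  shows "s \<longlonglongrightarrow> (\<Sum>k. s (Suc k) - s k)" "\<And>n. \<bar>(\<Sum>k. s (Suc k) - s k) - s n\<bar> \<le> C * q ^ n / (1 - q)"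
proof -
  define D where "D k = s (Suc k) - s k" for k
  have sg: "summable (\<lambda>k. C * q ^ k)" using q by (intro summable_mult summable_geometric) simp
  have sD: "summable D"
    by (rule summable_comparison_test[OF _ sg]) (use d in \<open>force simp: D_def\<close>)
  have tel: "s n = (\<Sum>k<n. D k)" for n unfolding D_def by (simp add: sum_lessThan_telescope s0)
  have sD_eq: "(\<Sum>k. D k) = (\<Sum>k. s (Suc k) - s k)" by (simp add: D_def)
  have "(\<lambda>n. \<Sum>k<n. D k) = s" by (rule ext) (rule tel[symmetric])
  then show "s \<longlonglongrightarrow> (\<Sum>k. s (Suc k) - s k)"
    using summable_LIMSEQ[OF sD] unfolding sD_eq by simp
  fix n
  have "(\<Sum>k. D k) = (\<Sum>k. D (k + n)) + (\<Sum>k<n. D k)" by (rule suminf_split_initial_segment[OF sD])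
  then have eq: "(\<Sum>k. D k) - s n = (\<Sum>k. D (k + n))" using tel[of n] by simp
  have sDn: "summable (\<lambda>k. \<bar>D (k + n)\<bar>)"
  proof (rule summable_comparison_test[OF _ summable_ignore_initial_segment[OF sg, of n]])
    show "\<exists>N. \<forall>k\<ge>N. norm \<bar>D (k + n)\<bar> \<le> C * q ^ (k + n)" unfolding D_def using d by simp
  qed
  have "\<bar>\<Sum>k. D (k + n)\<bar> \<le> (\<Sum>k. \<bar>D (k + n)\<bar>)" by (rule summable_rabs[OF sDn])
  also have "\<dots> \<le> (\<Sum>k. C * q ^ (k + n))"
    by (rule suminf_le[OF _ sDn summable_ignore_initial_segment[OF sg, of n]]) (unfold D_def, rule d)
  also have "\<dots> = (\<Sum>k. (C * q ^ n) * q ^ k)" by (rule arg_cong[where f=suminf]) (simp add: power_add fun_eq_iff algebra_simps)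
  also have "\<dots> = (C * q ^ n) * (1 / (1 - q))"
    using q by (subst suminf_mult[OF summable_geometric]) (auto simp: suminf_geometric)
  finally show "\<bar>(\<Sum>k. s (Suc k) - s k) - s n\<bar> \<le> C * q ^ n / (1 - q)"
    using eq unfolding sD_eq by simp
qed

context pctx begin

lemma S_good:
  fixes \<phi> :: "'a \<Rightarrow> real"
  assumes f: "\<phi> \<in> borel_measurable borel" and b: "\<And>x. \<bar>\<phi> x\<bar> \<le> B"
  shows "ctrans_X c e \<mu> \<phi> \<in> borel_measurable borel" "\<exists>A. \<forall>y. \<bar>ctrans_X c e \<mu> \<phi> y - A\<bar> \<le> 1"
proof -
  show "ctrans_X c e \<mu> \<phi> \<in> borel_measurable borel" by (rule X.G_meas[OF mu_meas[OF f]])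
  show "\<exists>A. \<forall>y. \<bar>ctrans_X c e \<mu> \<phi> y - A\<bar> \<le> 1"
  proof (intro exI[of _ "- e * ln (X.Z \<phi>)"] allI)
    fix y show "\<bar>ctrans_X c e \<mu> \<phi> y - - e * ln (X.Z \<phi>)\<bar> \<le> 1"
      using X.G_bounds[OF mu_meas[OF f] b, of y] by arith
  qed
qed

lemma T_good:
  fixes \<psi> :: "'b \<Rightarrow> real"
  assumes f: "\<psi> \<in> borel_measurable borel" and b: "\<And>x. \<bar>\<psi> x\<bar> \<le> B"
  shows "ctrans_Y c e \<nu> \<psi> \<in> borel_measurable borel" "\<exists>A. \<forall>y. \<bar>ctrans_Y c e \<nu> \<psi> y - A\<bar> \<le> 1"
proof -
  show "ctrans_Y c e \<nu> \<psi> \<in> borel_measurable borel" unfolding ctY by (rule Y.G_meas[OF nu_meas[OF f]])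
  show "\<exists>A. \<forall>y. \<bar>ctrans_Y c e \<nu> \<psi> y - A\<bar> \<le> 1" unfolding ctY
  proof (intro exI[of _ "- e * ln (Y.Z \<psi>)"] allI)
    fix y show "\<bar>ctrans_X (\<lambda>(y, x). c (x, y)) e \<nu> \<psi> y - - e * ln (Y.Z \<psi>)\<bar> \<le> 1"
      using Y.G_bounds[OF nu_meas[OF f] b, of y] by arith
  qed
qed

lemma bnd_of: "\<forall>y. \<bar>h y - A\<bar> \<le> (1::real) \<Longrightarrow> \<bar>h y\<bar> \<le> \<bar>A\<bar> + 1"
proof -
  assume "\<forall>y. \<bar>h y - A\<bar> \<le> (1::real)"
  then have "\<bar>h y - A\<bar> \<le> 1" by blast
  then show ?thesis by arith
qed

lemma S_lip:
  fixes \<phi>1 \<phi>2 :: "'a \<Rightarrow> real"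
  assumes f1: "\<phi>1 \<in> borel_measurable borel" and b1: "\<And>x. \<bar>\<phi>1 x\<bar> \<le> B1"
    and f2: "\<phi>2 \<in> borel_measurable borel" and b2: "\<And>x. \<bar>\<phi>2 x\<bar> \<le> B2"
    and d: "\<And>x. \<bar>\<phi>1 x - \<phi>2 x\<bar> \<le> d"
  shows "\<bar>ctrans_X c e \<mu> \<phi>1 y - ctrans_X c e \<mu> \<phi>2 y\<bar> \<le> d"
proof -
  have "-d \<le> \<phi>1 x - \<phi>2 x \<and> \<phi>1 x - \<phi>2 x \<le> -d + 2*d" for x using d[of x] by arith
  from X.G_mono2[OF mu_meas[OF f1] b1 mu_meas[OF f2] b2, of "-d" "2*d" y, OF this] show ?thesis by arith
qed

lemma T_lip:
  fixes \<psi>1 \<psi>2 :: "'b \<Rightarrow> real"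
  assumes f1: "\<psi>1 \<in> borel_measurable borel" and b1: "\<And>x. \<bar>\<psi>1 x\<bar> \<le> B1"
    and f2: "\<psi>2 \<in> borel_measurable borel" and b2: "\<And>x. \<bar>\<psi>2 x\<bar> \<le> B2"
    and d: "\<And>x. \<bar>\<psi>1 x - \<psi>2 x\<bar> \<le> d"
  shows "\<bar>ctrans_Y c e \<nu> \<psi>1 y - ctrans_Y c e \<nu> \<psi>2 y\<bar> \<le> d"
  unfolding ctY
proof -
  have "-d \<le> \<psi>1 x - \<psi>2 x \<and> \<psi>1 x - \<psi>2 x \<le> -d + 2*d" for x using d[of x] by arith
  from Y.G_mono2[OF nu_meas[OF f1] b1 nu_meas[OF f2] b2, of "-d" "2*d" y, OF this] show
    "\<bar>ctrans_X (\<lambda>(y, x). c (x, y)) e \<nu> \<psi>1 y - ctrans_X (\<lambda>(y, x). c (x, y)) e \<nu> \<psi>2 y\<bar> \<le> d" by arith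
qed

lemma F_good:
  fixes \<phi> :: "'a \<Rightarrow> real"
  assumes f: "\<phi> \<in> borel_measurable borel" and b: "\<And>x. \<bar>\<phi> x\<bar> \<le> B"
  shows "ctrans_Y c e \<nu> (ctrans_X c e \<mu> \<phi>) \<in> borel_measurable borel"
    "\<exists>A. \<forall>x. \<bar>ctrans_Y c e \<nu> (ctrans_X c e \<mu> \<phi>) x - A\<bar> \<le> 1"
proof -
  obtain A where A: "\<forall>y. \<bar>ctrans_X c e \<mu> \<phi> y - A\<bar> \<le> 1" using S_good(2)[OF f b] by blast
  note g = S_good(1)[OF f b] bnd_of[OF A]
  show "ctrans_Y c e \<nu> (ctrans_X c e \<mu> \<phi>) \<in> borel_measurable borel" by (rule T_good(1)[OF g])
  show "\<exists>A. \<forall>x. \<bar>ctrans_Y c e \<nu> (ctrans_X c e \<mu> \<phi>) x - A\<bar> \<le> 1" by (rule T_good(2)[OF g])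
qed

lemma F_lip:
  fixes \<phi>1 \<phi>2 :: "'a \<Rightarrow> real"
  assumes f1: "\<phi>1 \<in> borel_measurable borel" and b1: "\<And>x. \<bar>\<phi>1 x\<bar> \<le> B1"
    and f2: "\<phi>2 \<in> borel_measurable borel" and b2: "\<And>x. \<bar>\<phi>2 x\<bar> \<le> B2"
    and d: "\<And>x. \<bar>\<phi>1 x - \<phi>2 x\<bar> \<le> d"
  shows "\<bar>ctrans_Y c e \<nu> (ctrans_X c e \<mu> \<phi>1) x - ctrans_Y c e \<nu> (ctrans_X c e \<mu> \<phi>2) x\<bar> \<le> d"
proof -
  obtain A1 where A1: "\<forall>y. \<bar>ctrans_X c e \<mu> \<phi>1 y - A1\<bar> \<le> 1" using S_good(2)[OF f1 b1] by blast
  obtain A2 where A2: "\<forall>y. \<bar>ctrans_X c e \<mu> \<phi>2 y - A2\<bar> \<le> 1" using S_good(2)[OF f2 b2] by blast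
  show ?thesis
    by (rule T_lip[OF S_good(1)[OF f1 b1] bnd_of[OF A1] S_good(1)[OF f2 b2] bnd_of[OF A2]])
       (rule S_lip[OF f1 b1 f2 b2 d])
qed

lemma F_contr:
  fixes \<phi>1 \<phi>2 :: "'a \<Rightarrow> real"
  assumes f1: "\<phi>1 \<in> borel_measurable borel" and b1: "\<And>x. \<bar>\<phi>1 x\<bar> \<le> B1"
    and f2: "\<phi>2 \<in> borel_measurable borel" and b2: "\<And>x. \<bar>\<phi>2 x\<bar> \<le> B2"
    and d: "\<And>x. a \<le> \<phi>1 x - \<phi>2 x \<and> \<phi>1 x - \<phi>2 x \<le> a + L"
    and L: "0 \<le> L" "L \<le> 4"
  shows "\<exists>b. \<forall>x. b \<le> ctrans_Y c e \<nu> (ctrans_X c e \<mu> \<phi>1) x - ctrans_Y c e \<nu> (ctrans_X c e \<mu> \<phi>2) x \<and>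
             ctrans_Y c e \<nu> (ctrans_X c e \<mu> \<phi>1) x - ctrans_Y c e \<nu> (ctrans_X c e \<mu> \<phi>2) x \<le> b + lamb e ^ 2 * L"
proof -
  have lb: "0 \<le> lamb e" "lamb e < 1" using lamb_bounds[OF e_pos] by auto
  obtain A1 where A1: "\<forall>y. \<bar>ctrans_X c e \<mu> \<phi>1 y - A1\<bar> \<le> 1" using S_good(2)[OF f1 b1] by blast
  obtain A2 where A2: "\<forall>y. \<bar>ctrans_X c e \<mu> \<phi>2 y - A2\<bar> \<le> 1" using S_good(2)[OF f2 b2] by blast
  obtain b1 where B1: "\<forall>y. b1 \<le> ctrans_X c e \<mu> \<phi>1 y - ctrans_X c e \<mu> \<phi>2 y \<and>
                  ctrans_X c e \<mu> \<phi>1 y - ctrans_X c e \<mu> \<phi>2 y \<le> b1 + lamb e * L"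
    using X.G_contr[OF mu_meas[OF f1] b1 mu_meas[OF f2] b2 d L] by blast
  have L1: "0 \<le> lamb e * L" "lamb e * L \<le> 4"
  proof -
    show "0 \<le> lamb e * L" using lb L by simp
    have "lamb e * L \<le> 1 * L" using lb L by (intro mult_right_mono) auto
    then show "lamb e * L \<le> 4" using L by simp
  qed
  obtain b2 where B2: "\<forall>x. b2 \<le> ctrans_X (\<lambda>(y, x). c (x, y)) e \<nu> (ctrans_X c e \<mu> \<phi>1) x - ctrans_X (\<lambda>(y, x). c (x, y)) e \<nu> (ctrans_X c e \<mu> \<phi>2) x \<and>
        ctrans_X (\<lambda>(y, x). c (x, y)) e \<nu> (ctrans_X c e \<mu> \<phi>1) x - ctrans_X (\<lambda>(y, x). c (x, y)) e \<nu> (ctrans_X c e \<mu> \<phi>2) x \<le> b2 + lamb e * (lamb e * L)"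
    using Y.G_contr[OF nu_meas[OF S_good(1)[OF f1 b1]] bnd_of[OF A1] nu_meas[OF S_good(1)[OF f2 b2]] bnd_of[OF A2] _ L1, of b1]
      B1 by blast
  show ?thesis unfolding ctY using B2 by (intro exI[of _ b2]) (simp add: power2_eq_square mult.assoc)
qed

lemma ONE':
  fixes \<psi> :: "'b \<Rightarrow> real"
  assumes g: "\<psi> \<in> borel_measurable borel" and b: "\<And>y. \<bar>\<psi> y\<bar> \<le> B"
  shows "(\<integral>\<^sup>+z. ennreal (exp ((ctrans_Y c e \<nu> \<psi> (fst z) + \<psi> (snd z) - c z) / e)) \<partial>(\<mu> \<Otimes>\<^sub>M \<nu>)) = 1"
proof -
  interpret PP: pair_prob_space \<mu> \<nu>
    by (rule pair_prob_space.intro[OF pair_sigma_finite.intro]) (use mu_prob nu_prob prob_space_imp_sigma_finite in blast)+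
  have gm: "(\<lambda>z. (ctrans_Y c e \<nu> \<psi> (fst z) + \<psi> (snd z) - c z) / e) \<in> borel_measurable (\<mu> \<Otimes>\<^sub>M \<nu>)"
    by (rule g_meas[OF T_good(1)[OF g b] g])
  have F: "(\<lambda>z. ennreal (exp ((ctrans_Y c e \<nu> \<psi> (fst z) + \<psi> (snd z) - c z) / e))) \<in> borel_measurable (\<mu> \<Otimes>\<^sub>M \<nu>)"
    using gm by measurable
  have "(\<integral>\<^sup>+z. ennreal (exp ((ctrans_Y c e \<nu> \<psi> (fst z) + \<psi> (snd z) - c z) / e)) \<partial>(\<mu> \<Otimes>\<^sub>M \<nu>))
     = (\<integral>\<^sup>+x. (\<integral>\<^sup>+y. ennreal (exp ((ctrans_Y c e \<nu> \<psi> x + \<psi> y - c (x, y)) / e)) \<partial>\<nu>) \<partial>\<mu>)"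
    using PP.M2.nn_integral_fst[OF F] by simp
  also have "\<dots> = (\<integral>\<^sup>+x. 1 \<partial>\<mu>)"
  proof (intro nn_integral_cong)
    fix x
    have "(\<integral>\<^sup>+y. ennreal (exp ((\<psi> y + ctrans_X (\<lambda>(y, x). c (x, y)) e \<nu> \<psi> x - (\<lambda>(y, x). c (x, y)) (y, x)) / e)) \<partial>\<nu>) = 1"
      by (rule Y.G_one[OF nu_meas[OF g] b])
    then show "(\<integral>\<^sup>+y. ennreal (exp ((ctrans_Y c e \<nu> \<psi> x + \<psi> y - c (x, y)) / e)) \<partial>\<nu>) = 1"
      unfolding ctY by (simp add: add.commute)
  qed
  also have "\<dots> = 1" using prob_space.emeasure_space_1[OF mu_prob] by simp
  finally show ?thesis .
qed

end

context pctx begin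

lemma fixed_point:
  obtains \<phi> :: "'a \<Rightarrow> real" and \<psi> :: "'b \<Rightarrow> real" and B
  where "\<phi> \<in> borel_measurable borel" "\<And>x. \<bar>\<phi> x\<bar> \<le> 2" "\<psi> \<in> borel_measurable borel" "\<And>y. \<bar>\<psi> y\<bar> \<le> B"
    "\<And>y. ctrans_X c e \<mu> \<phi> y = \<psi> y" "\<And>x. ctrans_Y c e \<nu> \<psi> x = \<phi> x"
proof -
  define F where "F \<phi> = ctrans_Y c e \<nu> (ctrans_X c e \<mu> \<phi>)" for \<phi>
  define x0 :: 'a where "x0 = undefined"
  define ph where "ph = rec_nat (\<lambda>_. 0) (\<lambda>n f x. F f x - F f x0)"
  have ph0: "ph 0 = (\<lambda>_. 0)" by (simp add: ph_def)
  have phS: "ph (Suc n) = (\<lambda>x. F (ph n) x - F (ph n) x0)" for n by (simp add: ph_def)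
  define q where "q = lamb e ^ 2"
  have lb: "0 \<le> lamb e" "lamb e < 1" using lamb_bounds[OF e_pos] by auto
  have q: "0 \<le> q" "q < 1" unfolding q_def using lb by (auto simp: power_less_one_iff)
  have good: "ph n \<in> borel_measurable borel \<and> (\<forall>x. \<bar>ph n x\<bar> \<le> 2)" for n
  proof (induction n)
    case 0 then show ?case by (simp add: ph0)
  next
    case (Suc n)
    then have m: "ph n \<in> borel_measurable borel" and bd: "\<And>x. \<bar>ph n x\<bar> \<le> 2" by auto
    have Fm: "F (ph n) \<in> borel_measurable borel" unfolding F_def by (rule F_good(1)[OF m bd])
    obtain A where A: "\<forall>x. \<bar>F (ph n) x - A\<bar> \<le> 1" unfolding F_def using F_good(2)[OF m bd] by blast
    have "(\<lambda>x. F (ph n) x - F (ph n) x0) \<in> borel_measurable borel" using Fm by measurable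
    moreover have "\<bar>F (ph n) x - F (ph n) x0\<bar> \<le> 2" for x
    proof -
      have "\<bar>F (ph n) x - A\<bar> \<le> 1" "\<bar>F (ph n) x0 - A\<bar> \<le> 1" using A by auto
      then show ?thesis by arith
    qed
    ultimately show ?case by (simp add: phS)
  qed
  have gm: "ph n \<in> borel_measurable borel" and gb: "\<And>x. \<bar>ph n x\<bar> \<le> 2" for n using good[of n] by auto
  have x0z: "ph n x0 = 0" for n by (cases n) (simp_all add: ph0 phS)
  have diff: "\<exists>a. \<forall>x. a \<le> ph (Suc n) x - ph n x \<and> ph (Suc n) x - ph n x \<le> a + 4 * q ^ n" for n
  proof (induction n)
    case 0
    show ?case
    proof (intro exI[of _ "-2"] allI)
      fix x show "-2 \<le> ph (Suc 0) x - ph 0 x \<and> ph (Suc 0) x - ph 0 x \<le> -2 + 4 * q ^ 0"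
        using gb[of "Suc 0" x] by (simp add: ph0 abs_le_iff)
    qed
  next
    case (Suc n)
    then obtain a where a: "\<And>x. a \<le> ph (Suc n) x - ph n x \<and> ph (Suc n) x - ph n x \<le> a + 4 * q ^ n" by blast
    have L: "0 \<le> 4 * q ^ n" "4 * q ^ n \<le> 4" using q by (auto simp: power_le_one)
    obtain b where b: "\<forall>x. b \<le> F (ph (Suc n)) x - F (ph n) x \<and> F (ph (Suc n)) x - F (ph n) x \<le> b + lamb e ^ 2 * (4 * q ^ n)"
      unfolding F_def using F_contr[OF gm gb gm gb a L] by blast
    define \<kappa> where "\<kappa> = F (ph (Suc n)) x0 - F (ph n) x0"
    show ?case
    proof (intro exI[of _ "b - \<kappa>"] allI)
      fix x
      have eq: "ph (Suc (Suc n)) x - ph (Suc n) x = (F (ph (Suc n)) x - F (ph n) x) - \<kappa>"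
        by (simp add: phS[of "Suc n"] phS[of n] \<kappa>_def)
      have qq: "lamb e ^ 2 * (4 * q ^ n) = 4 * q ^ Suc n" by (simp add: q_def)
      show "b - \<kappa> \<le> ph (Suc (Suc n)) x - ph (Suc n) x \<and> ph (Suc (Suc n)) x - ph (Suc n) x \<le> b - \<kappa> + 4 * q ^ Suc n"
        unfolding eq using b qq by auto
    qed
  qed
  have dabs: "\<bar>ph (Suc n) x - ph n x\<bar> \<le> 4 * q ^ n" for n x
  proof -
    obtain a where a: "\<And>x. a \<le> ph (Suc n) x - ph n x \<and> ph (Suc n) x - ph n x \<le> a + 4 * q ^ n" using diff[of n] by blast
    have "a \<le> 0" "0 \<le> a + 4 * q ^ n" using a[of x0] by (auto simp: x0z)
    then show ?thesis using a[of x] by arith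
  qed
  define phs where "phs x = (\<Sum>k. ph (Suc k) x - ph k x)" for x
  have conv: "(\<lambda>n. ph n x) \<longlonglongrightarrow> phs x" for x
    unfolding phs_def by (rule seq_lemma(1)[of "\<lambda>n. ph n x" 4 q]) (use x0z ph0 dabs q in auto)
  have tail: "\<bar>phs x - ph n x\<bar> \<le> 4 * q ^ n / (1 - q)" for x n
    unfolding phs_def by (rule seq_lemma(2)[of "\<lambda>n. ph n x" 4 q]) (use x0z ph0 dabs q in auto)
  have phs_m: "phs \<in> borel_measurable borel"
    by (rule borel_measurable_LIMSEQ_real[OF conv gm])
  have phs_b: "\<bar>phs x\<bar> \<le> 2" for x
    by (rule LIMSEQ_le_const2[OF tendsto_rabs[OF conv[of x]]]) (use gb in auto)
  have tz: "(\<lambda>n. 4 * q ^ n / (1 - q)) \<longlonglongrightarrow> 0"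
    using q by (auto intro!: tendsto_eq_intros LIMSEQ_power_zero)
  have Fconv: "(\<lambda>n. F (ph n) x) \<longlonglongrightarrow> F phs x" for x
  proof -
    have "(\<lambda>n. F (ph n) x - F phs x) \<longlonglongrightarrow> 0"
    proof (rule Lim_null_comparison[OF _ tz])
      show "\<forall>\<^sub>F n in sequentially. norm (F (ph n) x - F phs x) \<le> 4 * q ^ n / (1 - q)"
        unfolding F_def using F_lip[OF gm gb phs_m phs_b] tail
        by (intro always_eventually allI) (auto simp: abs_minus_commute)
    qed
    from tendsto_add[OF this tendsto_const[of "F phs x"]] show ?thesis by simp
  qed
  have fixp: "F phs x - F phs x0 = phs x" for x
  proof -
    have "(\<lambda>n. ph (Suc n) x) \<longlonglongrightarrow> phs x" by (rule LIMSEQ_Suc[OF conv])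
    moreover have "(\<lambda>n. ph (Suc n) x) \<longlonglongrightarrow> F phs x - F phs x0"
      unfolding phS by (intro tendsto_diff Fconv)
    ultimately show ?thesis by (rule LIMSEQ_unique[symmetric])
  qed
  define k where "k = F phs x0"
  define \<psi>s where "\<psi>s = ctrans_X c e \<mu> phs"
  obtain A where A: "\<forall>y. \<bar>\<psi>s y - A\<bar> \<le> 1" unfolding \<psi>s_def using S_good(2)[OF phs_m phs_b] by blast
  have psm: "\<psi>s \<in> borel_measurable borel" unfolding \<psi>s_def by (rule S_good(1)[OF phs_m phs_b])
  have psb: "\<bar>\<psi>s y\<bar> \<le> \<bar>A\<bar> + 1" for y by (rule bnd_of[OF A])
  have Tps: "ctrans_Y c e \<nu> \<psi>s x = phs x + k" for x
    using fixp[of x] unfolding F_def k_def \<psi>s_def by simp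
  have k0: "k = 0"
  proof -
    have o1: "(\<integral>\<^sup>+z. ennreal (exp ((phs (fst z) + \<psi>s (snd z) - c z) / e)) \<partial>(\<mu> \<Otimes>\<^sub>M \<nu>)) = 1"
      unfolding \<psi>s_def by (rule ONE[OF phs_m phs_b])
    have o2: "(\<integral>\<^sup>+z. ennreal (exp ((ctrans_Y c e \<nu> \<psi>s (fst z) + \<psi>s (snd z) - c z) / e)) \<partial>(\<mu> \<Otimes>\<^sub>M \<nu>)) = 1"
      by (rule ONE'[OF psm psb])
    have eqz: "ennreal (exp ((ctrans_Y c e \<nu> \<psi>s (fst z) + \<psi>s (snd z) - c z) / e))
        = ennreal (exp (k / e)) * ennreal (exp ((phs (fst z) + \<psi>s (snd z) - c z) / e))" for z
      unfolding Tps by (simp add: ennreal_mult[symmetric] mult_exp_exp add_divide_distrib diff_divide_distrib algebra_simps)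
    have mz: "(\<lambda>z. ennreal (exp ((phs (fst z) + \<psi>s (snd z) - c z) / e))) \<in> borel_measurable (\<mu> \<Otimes>\<^sub>M \<nu>)"
      using g_meas[OF phs_m psm] by measurable
    have "1 = ennreal (exp (k / e)) * 1"
      using o2 unfolding eqz nn_integral_cmult[OF mz] o1 by (rule sym)
    then have "exp (k / e) = 1" by simp
    then have "k / e = 0" by simp
    then show ?thesis using e_pos by simp
  qed
  show ?thesis
  proof (rule that[OF phs_m phs_b psm psb])
    show "\<And>y. ctrans_X c e \<mu> phs y = \<psi>s y" by (simp add: \<psi>s_def)
    show "\<And>x. ctrans_Y c e \<nu> \<psi>s x = phs x" using Tps k0 by simp
  qed
qed

end

theorem mainTheorem1:
  fixes c :: "'a::polish_space \<times> 'b::polish_space \<Rightarrow> real" and \<epsilon> :: real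
  assumes "c \<in> borel_measurable (borel \<Otimes>\<^sub>M borel)"
    and "\<And>x y. \<bar>c (x, y)\<bar> \<le> 1"
    and "\<epsilon> > 0"
    and "\<mu> \<in> Prob" and "\<nu> \<in> Prob"
  shows "(\<exists>\<phi> \<in> Fce c \<epsilon>. OT c \<epsilon> \<mu> \<nu> =
            ereal ((\<integral> x. \<phi> x \<partial>\<mu>) + (\<integral> y. ctrans_X c \<epsilon> \<mu> \<phi> y \<partial>\<nu>)))
       \<and> (\<forall>\<phi> \<in> Fce c \<epsilon>.
            ereal ((\<integral> x. \<phi> x \<partial>\<mu>) + (\<integral> y. ctrans_X c \<epsilon> \<mu> \<phi> y \<partial>\<nu>)) \<le> OT c \<epsilon> \<mu> \<nu>)"
proof -
  note cm = assms(1) and cb = assms(2) and ep = assms(3)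
  have mu: "prob_space \<mu>" "sets \<mu> = sets borel" using assms(4) by (auto simp: Prob_def)
  have nu: "prob_space \<nu>" "sets \<nu> = sets borel" using assms(5) by (auto simp: Prob_def)
  interpret pctx c \<epsilon> \<mu> \<nu>
    by (rule pctx.intro[OF cm cb ep mu nu])
  have lowerOT: "ereal ((\<integral> x. \<phi> x \<partial>\<mu>) + (\<integral> y. ctrans_X c \<epsilon> \<mu> \<phi> y \<partial>\<nu>)) \<le> OT c \<epsilon> \<mu> \<nu>"
    if f: "\<phi> \<in> borel_measurable borel" and b: "\<And>x. \<bar>\<phi> x\<bar> \<le> B" for \<phi> :: "'a \<Rightarrow> real" and B
    unfolding OT_def by (rule INF_greatest) (rule weak[OF f b])
  obtain \<phi> \<psi> B where fm: "\<phi> \<in> borel_measurable borel" and fb: "\<And>x. \<bar>\<phi> x\<bar> \<le> 2"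
    and gm: "\<psi> \<in> borel_measurable borel" and gb: "\<And>y. \<bar>\<psi> y\<bar> \<le> B"
    and hpsi: "\<And>y. ctrans_X c \<epsilon> \<mu> \<phi> y = \<psi> y" and hphi: "\<And>x. ctrans_Y c \<epsilon> \<nu> \<psi> x = \<phi> x"
    using fixed_point by blast
  define At where "At = - \<epsilon> * ln (Y.Z \<psi>)"
  define Bs where "Bs = - \<epsilon> * ln (X.Z \<phi>)"
  have phib: "At - 1 \<le> \<phi> x \<and> \<phi> x \<le> At + 1" for x
    using Y.G_bounds[OF nu_meas[OF gm] gb, of x] hphi[of x] unfolding ctY At_def by simp
  have psib: "Bs - 1 \<le> \<psi> y \<and> \<psi> y \<le> Bs + 1" for y
    using X.G_bounds[OF mu_meas[OF fm] fb, of y] hpsi[of y] unfolding Bs_def by simp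
  have AB: "- (Bs - 1) - 2 \<le> At \<and> At \<le> - (Bs - 1)" unfolding At_def
  proof (rule Y.Z_bounds[OF nu_meas[OF gm]])
    fix y show "Bs - 1 \<le> \<psi> y \<and> \<psi> y \<le> Bs - 1 + 2" using psib[of y] by simp
  qed
  define t where "t = (Bs - At) / 2"
  define \<phi>' where "\<phi>' x = \<phi> x + t" for x
  define \<psi>' where "\<psi>' y = \<psi> y + (- t)" for y
  have fm': "\<phi>' \<in> borel_measurable borel" unfolding \<phi>'_def using fm by measurable
  have gm': "\<psi>' \<in> borel_measurable borel" unfolding \<psi>'_def using gm by measurable
  have fb': "\<bar>\<phi>' x\<bar> \<le> 3/2" for x
  proof -
    have "At - 1 \<le> \<phi> x" "\<phi> x \<le> At + 1" "- (Bs - 1) - 2 \<le> At" "At \<le> - (Bs - 1)" using phib[of x] AB by auto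
    then have "\<phi> x + (Bs - At) / 2 \<le> 3 / 2" "- (\<phi> x + (Bs - At) / 2) \<le> 3 / 2" by (simp_all add: field_simps)
    then show ?thesis unfolding \<phi>'_def t_def abs_le_iff by blast
  qed
  have gb': "\<bar>\<psi>' y\<bar> \<le> 3/2" for y
  proof -
    have "Bs - 1 \<le> \<psi> y" "\<psi> y \<le> Bs + 1" "- (Bs - 1) - 2 \<le> At" "At \<le> - (Bs - 1)" using psib[of y] AB by auto
    then have "\<psi> y + - ((Bs - At) / 2) \<le> 3 / 2" "- (\<psi> y + - ((Bs - At) / 2)) \<le> 3 / 2" by (simp_all add: field_simps)
    then show ?thesis unfolding \<psi>'_def t_def abs_le_iff by blast
  qed
  have hpsi': "ctrans_X c \<epsilon> \<mu> \<phi>' y = \<psi>' y" for y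
    unfolding \<phi>'_def \<psi>'_def using X.G_shift[OF mu_meas[OF fm] fb, of t y] hpsi[of y] by simp
  have hphi': "ctrans_Y c \<epsilon> \<nu> \<psi>' x = \<phi>' x" for x
    unfolding \<phi>'_def \<psi>'_def ctY using Y.G_shift[OF nu_meas[OF gm] gb, of "-t" x] hphi[of x] unfolding ctY by simp
  have inF: "\<phi>' \<in> Fce c \<epsilon>"
    unfolding Fce_def
  proof (rule UN_I[OF assms(5)], intro CollectI exI conjI allI)
    show "\<psi>' \<in> borel_measurable borel" by (rule gm')
    show "\<phi>' = ctrans_Y c \<epsilon> \<nu> \<psi>'" using hphi' by (intro ext) simp
    show "\<bar>\<phi>' x\<bar> \<le> 3/2" for x by (rule fb')
    show "\<bar>\<psi>' y\<bar> \<le> 3/2" for y by (rule gb')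
  qed
  have val: "(\<integral> y. ctrans_X c \<epsilon> \<mu> \<phi>' y \<partial>\<nu>) = (\<integral> y. \<psi>' y \<partial>\<nu>)" using hpsi' by simp
  have up: "OT c \<epsilon> \<mu> \<nu> \<le> ereal ((\<integral> x. \<phi>' x \<partial>\<mu>) + (\<integral> y. \<psi>' y \<partial>\<nu>))"
    by (rule strong[OF fm' fb' gm' gb' hpsi' hphi'])
  have lo: "ereal ((\<integral> x. \<phi>' x \<partial>\<mu>) + (\<integral> y. ctrans_X c \<epsilon> \<mu> \<phi>' y \<partial>\<nu>)) \<le> OT c \<epsilon> \<mu> \<nu>"
    by (rule lowerOT[OF fm' fb'])
  have part1: "\<exists>\<phi> \<in> Fce c \<epsilon>. OT c \<epsilon> \<mu> \<nu> = ereal ((\<integral> x. \<phi> x \<partial>\<mu>) + (\<integral> y. ctrans_X c \<epsilon> \<mu> \<phi> y \<partial>\<nu>))"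
  proof (rule bexI[OF _ inF])
    show "OT c \<epsilon> \<mu> \<nu> = ereal ((\<integral> x. \<phi>' x \<partial>\<mu>) + (\<integral> y. ctrans_X c \<epsilon> \<mu> \<phi>' y \<partial>\<nu>))"
      unfolding val using antisym[OF up lo[unfolded val]] .
  qed
  have part2: "ereal ((\<integral> x. \<phi> x \<partial>\<mu>) + (\<integral> y. ctrans_X c \<epsilon> \<mu> \<phi> y \<partial>\<nu>)) \<le> OT c \<epsilon> \<mu> \<nu>"
    if "\<phi> \<in> Fce c \<epsilon>" for \<phi>
  proof -
    from that obtain \<xi> \<psi> where xi: "\<xi> \<in> Prob" and psm: "\<psi> \<in> borel_measurable borel"
      and eq: "\<phi> = ctrans_Y c \<epsilon> \<xi> \<psi>" and pb: "\<And>x. \<bar>\<phi> x\<bar> \<le> 3/2"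
      unfolding Fce_def by blast
    have xi': "prob_space \<xi>" "sets \<xi> = sets borel" using xi by (auto simp: Prob_def)
    interpret Z: ctx "\<lambda>(y, x). c (x, y)" \<epsilon> \<xi>
      by (rule ctx.intro[OF c_swap_meas _ ep xi']) (simp add: cb)
    have "\<phi> = ctrans_X (\<lambda>(y, x). c (x, y)) \<epsilon> \<xi> \<psi>" unfolding eq by (rule ext) (simp add: ctrans_Y_def ctrans_X_def)
    then have fm2: "\<phi> \<in> borel_measurable borel"
      using Z.G_meas[OF Z.meas_M[OF psm]] by simp
    show ?thesis by (rule lowerOT[OF fm2 pb])
  qed
  show ?thesis using part1 part2 by blast
qed

end
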